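(* With notation as below, the sequence $C$ given by $C_0=Q$, $C_1=\mathbb{F}_1\oplus\mathbb{G}_1$, $C_i=\mathbb{F}_i\oplus\mathbb{G}_i\oplus\mathbb{G}_{i-1}$ for $i\ge2$ (the last summand with internal degree shifted up by one), with differential $d_1(f,g)=\partial^{\mathbb{F}}(f)+\partial^{\mathbb{G}}(g)$, $d_2(f,g,h)=(\partial^{\mathbb{F}}f+\Phi_1(h),\ \partial^{\mathbb{G}}g-zh)$, and $d_i(f,g,h)=(\partial^{\mathbb{F}}f+\Phi_{i-1}(h),\ \partial^{\mathbb{G}}g-zh,\ -\partial^{\mathbb{G}}h)$ for $i\ge3$, is a complex and is the minimal $Q$-free resolution of $Q/I_\Gamma$. (Equivalently, $C$ is the mapping cone of the chain map $\Psi:\mathrm{Cone}(\mu^z)\to\mathbb{F}$ with $\Psi_0=(\partial^{\mathbb{G}}_1,0)$ and $\Psi_i=(0,\Phi_i)$ for $i>0$, where $\mu^z$ is multiplication by $z$ on $\Sigma^{-1}\mathbb{G}_{>0}$ and $\mathrm{Cone}(\mu^z)$ is the minimal free resolution of $J/zJ\cong I_\Gamma/I$.)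
   Context: Let $n\ge1$, $a_1,\ldots,a_n\ge0$, $Q=\Bbbk[z,x_1,\ldots,x_n,y_{i,j}\ (1\le i\le n,1\le j\le a_i)]$ over a field $\Bbbk$, $\Gamma$ the tree with edges $\{z,x_i\}$ and $\{x_i,y_{i,j}\}$ (every diameter-four tree can be labeled so), $I=(zx_1,\ldots,zx_n)$, $J=(x_iy_{i,j})$, $I_\Gamma=I+J$. Order $G(I)$ by $zx_i<zx_j$ iff $i<j$ and $G(J)$ by $x_iy_{i,\ell}<x_jy_{j,p}$ iff $i<j$, or $i=j$ and $\ell<p$. For a monomial ideal with ordered generating set and $U$ a set of generators, $m_U=\mathrm{lcm}(U)$; the Taylor resolution has basis $e_U$ in degree $|U|$ and differential $\partial(e_U)=\sum_{u\in U}(-1)^{|\{v\in U:v<u\}|}\frac{m_U}{m_{U\setminus\{u\}}}e_{U\setminus\{u\}}$. Let $\mathbb{F}$ (basis $f_V$, $V\subseteq G(I)$) and $\mathbb{G}$ (basis $g_W$, $W\subseteq G(J)$) be the Taylor resolutions of $Q/I$ and $Q/J$. For $W\subseteq G(J)$, let $W_z$ be the multiset $\{zx_i: x_iy_{i,j}\in W\}$ (ordered as in $W$), and $y_W=\mathrm{lcm}\{y_{i,j}:x_iy_{i,j}\in W\}$. Define $\Phi:\mathbb{G}\to\mathbb{F}$ by $\Phi_0(1)=z$ and $\Phi(g_W)=y_Wf_{W_z}$ for $W\ne\emptyset$, where $f_{W_z}:=0$ if some $zx_i$ occurs more than once in $W_z$; $\Phi$ is a chain map lifting $Q/J\xrightarrow{\cdot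 z}Q/I$. *)

theory Defs
  imports Main "HOL-Library.Poly_Mapping" "HOL-Library.Product_Lexorder"
begin

datatype var = Zv | Xv nat | Yv nat nat

text \<open>The polynomial ring Q over a field k: finitely supported functions from
  monomials (exponent vectors var =>0 nat) to coefficients.\<close>
type_synonym 'k qpoly = "(var \<Rightarrow>\<^sub>0 nat) \<Rightarrow>\<^sub>0 'k"

definition Var :: "var \<Rightarrow> 'k::field qpoly" where
  "Var v = Poly_Mapping.single (Poly_Mapping.single v 1) 1"

definition mono :: "(var \<Rightarrow> nat) \<Rightarrow> 'k::field qpoly" where
  "mono e = (\<Prod>v\<in>{v. e v \<noteq> 0}. Var v ^ e v)"

text \<open>Exponent of lcm of the monomials g u, u in U (exponent 0 for U empty).\<close>
definition mexp :: "('g \<Rightarrow> var \<Rightarrow> nat) \<Rightarrow> 'g set \<Rightarrow> var \<Rightarrow> nat" where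
  "mexp g U = (\<lambda>v. Max (insert 0 ((\<lambda>u. g u v) ` U)))"

text \<open>Taylor resolution: coefficient of basis element e_U' in the boundary of e_U,
  for generators g ordered by the linear order of 'g.\<close>
definition taylor_entry :: "('g::linorder \<Rightarrow> var \<Rightarrow> nat) \<Rightarrow> 'g set \<Rightarrow> 'g set \<Rightarrow> 'k::field qpoly" where
  "taylor_entry g U U' =
     (\<Sum>u\<in>U. if U' = U - {u}
              then (-1) ^ card {v\<in>U. v < u} * mono (\<lambda>x. mexp g U x - mexp g (U - {u}) x)
              else 0)"

text \<open>Generators: zx_i of I indexed by i, x_i y_ij of J indexed by (i,j) (lex order).\<close>
definition gI :: "nat \<Rightarrow> var \<Rightarrow> nat" where
  "gI i = (\<lambda>v. if v = Zv \<or> v = Xv i then 1 else 0)"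

definition gJ :: "nat \<times> nat \<Rightarrow> var \<Rightarrow> nat" where
  "gJ p = (\<lambda>v. if v = Xv (fst p) \<or> v = Yv (fst p) (snd p) then 1 else 0)"

definition GI :: "nat \<Rightarrow> nat set" where
  "GI n = {1..n}"

definition GJ :: "nat \<Rightarrow> (nat \<Rightarrow> nat) \<Rightarrow> (nat \<times> nat) set" where
  "GJ n a = Sigma {1..n} (\<lambda>i. {1..a i})"

definition ideal_gen :: "'k::field qpoly set \<Rightarrow> 'k qpoly set" where
  "ideal_gen S = {p. \<exists>c. p = (\<Sum>s\<in>S. c s * s)}"

definition I_Gamma_gens :: "nat \<Rightarrow> (nat \<Rightarrow> nat) \<Rightarrow> 'k::field qpoly set" where
  "I_Gamma_gens n a = (\<lambda>i. mono (gI i)) ` GI n \<union> (\<lambda>p. mono (gJ p)) ` GJ n a"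

text \<open>Basis of C_i: CF V = f_V in F_i, CG W = g_W in G_i, CH W = g_W in the summand G_(i-1).
  C_0 = Q with basis element CF {}.\<close>
datatype cb = CF "nat set" | CG "(nat \<times> nat) set" | CH "(nat \<times> nat) set"

definition cbasis :: "nat \<Rightarrow> (nat \<Rightarrow> nat) \<Rightarrow> nat \<Rightarrow> cb set" where
  "cbasis n a i =
     (if i = 0 then {CF {}}
      else CF ` {V. V \<subseteq> GI n \<and> card V = i}
         \<union> CG ` {W. W \<subseteq> GJ n a \<and> card W = i}
         \<union> (if 2 \<le> i then CH ` {W. W \<subseteq> GJ n a \<and> card W = i - 1} else {}))"

definition yW :: "(nat \<times> nat) set \<Rightarrow> 'k::field qpoly" where
  "yW W = mono (\<lambda>v. if \<exists>p\<in>W. v = Yv (fst p) (snd p) then 1 else 0)"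

text \<open>Phi(g_W) = y_W f_{W_z}: coefficient on f_V (zero if W_z has repetitions).\<close>
definition Phi_entry :: "(nat \<times> nat) set \<Rightarrow> nat set \<Rightarrow> 'k::field qpoly" where
  "Phi_entry W V = (if inj_on fst W \<and> V = fst ` W then yW W else 0)"

text \<open>Matrix of the differential d: coefficient of basis element b' of C_(i-1)
  in d_i(b) for b a basis element of C_i.\<close>
fun cdiff :: "cb \<Rightarrow> cb \<Rightarrow> 'k::field qpoly" where
  "cdiff (CF V) (CF V') = taylor_entry gI V V'"
| "cdiff (CG W) (CG W') = taylor_entry gJ W W'"
| "cdiff (CG W) (CF V') = (if card W = 1 \<and> V' = {} then taylor_entry gJ W {} else 0)"
| "cdiff (CH W) (CF V') = Phi_entry W V'"
| "cdiff (CH W) (CG W') = (if W' = W then - Var Zv else 0)"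
| "cdiff (CH W) (CH W') = - taylor_entry gJ W W'"
| "cdiff _ _ = 0"

text \<open>Elements of the free module C_i are coefficient functions cb => Q vanishing
  outside cbasis i; d_i applied to such an element.\<close>
definition dC :: "nat \<Rightarrow> (nat \<Rightarrow> nat) \<Rightarrow> nat \<Rightarrow> (cb \<Rightarrow> 'k::field qpoly) \<Rightarrow> cb \<Rightarrow> 'k qpoly" where
  "dC n a i x = (\<lambda>b'. if b' \<in> cbasis n a (i - 1)
                      then (\<Sum>b\<in>cbasis n a i. x b * cdiff b b') else 0)"

definition in_C :: "nat \<Rightarrow> (nat \<Rightarrow> nat) \<Rightarrow> nat \<Rightarrow> (cb \<Rightarrow> 'k::field qpoly) \<Rightarrow> bool" where
  "in_C n a i x \<longleftrightarrow> (\<forall>b. b \<notin> cbasis n a i \<longrightarrow> x b = 0)"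

end

theory Submission
  imports Defs
begin


definition sg :: "'g::linorder set \<Rightarrow> 'g \<Rightarrow> 'k::comm_ring_1" where
  "sg U u = (-1) ^ card {v\<in>U. v < u}"

definition tsign :: "'g::linorder set \<Rightarrow> 'g set \<Rightarrow> 'k::comm_ring_1" where
  "tsign U U' = (\<Sum>u\<in>U. if U' = U - {u} then sg U u else 0)"

lemma tsign_sum:
  assumes "finite U" "finite A" "\<And>u. u \<in> U \<Longrightarrow> U - {u} \<in> A"
  shows "(\<Sum>U'\<in>A. tsign U U' * f U') = (\<Sum>u\<in>U. sg U u * f (U - {u}))"
proof -
  have "(\<Sum>U'\<in>A. tsign U U' * f U') = (\<Sum>U'\<in>A. \<Sum>u\<in>U. (if U' = U - {u} then sg U u * f U' else 0))"
    unfolding tsign_def sum_distrib_right by (intro sum.cong refl) (auto)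
  also have "\<dots> = (\<Sum>u\<in>U. \<Sum>U'\<in>A. (if U' = U - {u} then sg U u * f U' else 0))"
    by (rule sum.swap)
  also have "\<dots> = (\<Sum>u\<in>U. sg U u * f (U - {u}))"
    using assms by (intro sum.cong refl) (simp add: sum.delta')
  finally show ?thesis .
qed

lemma sg_remove_less:
  assumes "finite U" "u \<in> U" "v \<in> U" "u < v"
  shows "sg (U - {u}) v = - (sg U v :: 'k::comm_ring_1)"
proof -
  have "{w\<in>U. w < v} = insert u {w\<in>U - {u}. w < v}" using assms by auto
  hence "card {w\<in>U. w < v} = Suc (card {w\<in>U - {u}. w < v})" using assms by simp
  thus ?thesis unfolding sg_def by simp
qed

lemma sg_remove_greater:
  assumes "finite U" "u \<in> U" "v \<in> U" "v < u"
  shows "sg (U - {u}) v = (sg U v :: 'k::comm_ring_1)"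
proof -
  have "{w\<in>U. w < v} = {w\<in>U - {u}. w < v}" using assms by auto
  thus ?thesis unfolding sg_def by simp
qed

lemma tsign_eq: "finite U \<Longrightarrow> tsign U U' = (\<Sum>u\<in>U. if U' = U - {u} then sg U u else 0)"
  by (simp add: tsign_def)

lemma taylor_dd:
  assumes "finite U"
  shows "(\<Sum>u\<in>U. sg U u * tsign (U - {u}) U2) = (0::'k::comm_ring_1)"
proof -
  define F where "F = (\<lambda>(u,v). (if U2 = U - {u} - {v} then sg U u * sg (U - {u}) v else (0::'k)))"
  have "(\<Sum>u\<in>U. sg U u * tsign (U - {u}) U2) = (\<Sum>u\<in>U. \<Sum>v\<in>U - {u}. F (u,v))"
    unfolding tsign_def F_def sum_distrib_left by (intro sum.cong refl) auto
  also have "\<dots> = (\<Sum>p\<in>Sigma U (\<lambda>u. U - {u}). F p)"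
    using assms by (simp add: sum.Sigma)
  also have "Sigma U (\<lambda>u. U - {u}) = {p\<in>U\<times>U. fst p < snd p} \<union> {p\<in>U\<times>U. snd p < fst p}"
    by auto
  also have "(\<Sum>p\<in>\<dots>. F p) = (\<Sum>p\<in>{p\<in>U\<times>U. fst p < snd p}. F p) + (\<Sum>p\<in>{p\<in>U\<times>U. snd p < fst p}. F p)"
    using assms by (intro sum.union_disjoint) auto
  also have "(\<Sum>p\<in>{p\<in>U\<times>U. snd p < fst p}. F p) = (\<Sum>p\<in>{p\<in>U\<times>U. fst p < snd p}. F (snd p, fst p))"
  proof (rule sum.reindex_bij_witness[of _ "\<lambda>(a,b). (b,a)" "\<lambda>(a,b). (b,a)"])
  qed auto
  also have "(\<Sum>p\<in>{p\<in>U\<times>U. fst p < snd p}. F (snd p, fst p)) = - (\<Sum>p\<in>{p\<in>U\<times>U. fst p < snd p}. F p)"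
    unfolding sum_negf[symmetric]
  proof (intro sum.cong refl)
    fix p assume p: "p \<in> {p\<in>U\<times>U. fst p < snd p}"
    obtain u v where uv: "p = (u,v)" by (cases p)
    with p have "u \<in> U" "v \<in> U" "u < v" by auto
    hence "sg (U - {u}) v = - (sg U v :: 'k)" "sg (U - {v}) u = (sg U u :: 'k)"
      using assms sg_remove_less sg_remove_greater by auto
    moreover have "U - {v} - {u} = U - {u} - {v}" by auto
    ultimately show "F (snd p, fst p) = - F p" unfolding F_def uv by (auto simp: mult.commute)
  qed
  finally show ?thesis by simp
qed

text \<open>Cone homotopy on the simplex with minimal cone point.\<close>
lemma sg_min: assumes "u0 \<in> U" "\<And>u. u \<in> U \<Longrightarrow> u0 \<le> u" shows "sg U u0 = 1"
proof -
  have "\<forall>v\<in>U. \<not> v < u0" using assms(2) by (simp add: not_less)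
  hence "{v\<in>U. v < u0} = {}" by blast
  thus ?thesis unfolding sg_def by (metis card.empty power_0)
qed

lemma sg_insert_min:
  assumes "finite U" "u \<in> U" "u0 \<notin> U" "\<And>u. u \<in> U \<Longrightarrow> u0 \<le> u"
  shows "sg (insert u0 U) u = - (sg U u :: 'k::comm_ring_1)"
proof -
  have "u0 < u" using assms by (metis order_le_neq_trans)
  have "{v\<in>insert u0 U. v < u} = insert u0 {v\<in>U. v < u}" using \<open>u0 < u\<close> by auto
  hence "card {v\<in>insert u0 U. v < u} = Suc (card {v\<in>U. v < u})" using assms by simp
  thus ?thesis unfolding sg_def by simp
qed

lemma taylor_cone:
  assumes "finite U" "\<And>u. u \<in> U \<Longrightarrow> u0 \<le> u"
  shows "(if u0 \<notin> U then tsign (insert u0 U) U2 else 0)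
         + (\<Sum>u\<in>U. sg U u * (if u0 \<notin> U - {u} \<and> U2 = insert u0 (U - {u}) then 1 else 0))
         = (if U2 = U then 1 else (0::'k::comm_ring_1))"
proof (cases "u0 \<in> U")
  case True
  have "(\<Sum>u\<in>U. sg U u * (if u0 \<notin> U - {u} \<and> U2 = insert u0 (U - {u}) then 1 else (0::'k)))
      = (\<Sum>u\<in>U. if u = u0 then (if U2 = U then 1 else 0) else 0)"
  proof (intro sum.cong refl)
    fix u assume "u \<in> U"
    show "sg U u * (if u0 \<notin> U - {u} \<and> U2 = insert u0 (U - {u}) then 1 else (0::'k)) = (if u = u0 then (if U2 = U then 1 else 0) else 0)"
      using True assms sg_min[of u0 U] by (auto simp: insert_absorb)
  qed
  also have "\<dots> = (if U2 = U then 1 else 0)" using True assms by (simp add: sum.delta)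
  finally show ?thesis using True by simp
next
  case False
  have "tsign (insert u0 U) U2 = (\<Sum>u\<in>insert u0 U. if U2 = insert u0 U - {u} then sg (insert u0 U) u else (0::'k))"
    by (simp add: tsign_def)
  also have "\<dots> = (if U2 = U then sg (insert u0 U) u0 else 0) + (\<Sum>u\<in>U. if U2 = insert u0 U - {u} then sg (insert u0 U) u else (0::'k))"
    using False assms by simp
  also have "sg (insert u0 U) u0 = (1::'k)" using assms by (intro sg_min) auto
  also have "(\<Sum>u\<in>U. if U2 = insert u0 U - {u} then sg (insert u0 U) u else (0::'k))
     = - (\<Sum>u\<in>U. sg U u * (if u0 \<notin> U - {u} \<and> U2 = insert u0 (U - {u}) then 1 else 0))"
    unfolding sum_negf[symmetric]
  proof (intro sum.cong refl)
    fix u assume u: "u \<in> U"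
    have "insert u0 U - {u} = insert u0 (U - {u})" using u False by auto
    thus "(if U2 = insert u0 U - {u} then sg (insert u0 U) u else (0::'k)) = - (sg U u * (if u0 \<notin> U - {u} \<and> U2 = insert u0 (U - {u}) then 1 else 0))"
      using sg_insert_min[OF assms(1) u False assms(2)] False by auto
  qed
  finally show ?thesis using False by simp
qed


lemma lex_inj_less:
  fixes W :: "(nat \<times> nat) set"
  assumes "inj_on fst W" "v \<in> W" "w \<in> W"
  shows "v < w \<longleftrightarrow> fst v < fst w"
proof (cases "v = w")
  case True thus ?thesis by simp
next
  case False
  hence "fst v \<noteq> fst w" using assms inj_on_def by metis
  thus ?thesis by (auto simp: less_prod_def')
qed

lemma sg_fst:
  fixes W :: "(nat \<times> nat) set"
  assumes "finite W" "inj_on fst W" "w \<in> W"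
  shows "sg W w = (sg (fst ` W) (fst w) :: 'k::comm_ring_1)"
proof -
  have "fst ` {v\<in>W. v < w} = {i\<in>fst ` W. i < fst w}"
    using lex_inj_less[OF assms(2) _ assms(3)] by auto
  moreover have "inj_on fst {v\<in>W. v < w}" using assms(2) by (rule inj_on_subset) auto
  ultimately have "card {v\<in>W. v < w} = card {i\<in>fst ` W. i < fst w}"
    by (metis card_image)
  thus ?thesis by (simp add: sg_def)
qed

lemma inj_fst_sum:
  fixes W :: "(nat \<times> nat) set"
  assumes "finite W" "inj_on fst W"
  shows "(\<Sum>w\<in>W. sg W w * (if inj_on fst (W - {w}) \<and> Q (fst ` (W - {w})) then c else 0))
       = (\<Sum>i\<in>fst ` W. sg (fst ` W) i * (if Q (fst ` W - {i}) then c else (0::'k::comm_ring_1)))"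
proof -
  have "(\<Sum>i\<in>fst ` W. sg (fst ` W) i * (if Q (fst ` W - {i}) then c else (0::'k)))
      = (\<Sum>w\<in>W. sg (fst ` W) (fst w) * (if Q (fst ` W - {fst w}) then c else (0::'k)))"
    using assms by (simp add: sum.reindex)
  also have "\<dots> = (\<Sum>w\<in>W. sg W w * (if inj_on fst (W - {w}) \<and> Q (fst ` (W - {w})) then c else 0))"
  proof (intro sum.cong refl)
    fix w assume w: "w \<in> W"
    have "fst ` (W - {w}) = fst ` W - {fst w}" using assms(2) w by (auto simp: inj_on_def)
    moreover have "inj_on fst (W - {w})" using assms(2) by (rule inj_on_subset) auto
    ultimately show "sg (fst ` W) (fst w) * (if Q (fst ` W - {fst w}) then c else (0::'k)) =
         sg W w * (if inj_on fst (W - {w}) \<and> Q (fst ` (W - {w})) then c else 0)"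
      using sg_fst[OF assms w, where 'k='k] by simp
  qed
  finally show ?thesis by simp
qed

lemma inj_swap:
  fixes W :: "(nat \<times> nat) set"
  assumes "fst u = fst u'" "u \<in> W" "u' \<in> W" "u \<noteq> u'" "inj_on fst (W - {u})"
  shows "inj_on fst (W - {u'})"
  unfolding inj_on_def
proof (intro ballI impI)
  fix x y assume x: "x \<in> W - {u'}" and y: "y \<in> W - {u'}" and e: "fst x = fst y"
  show "x = y"
  proof (cases "x = u \<or> y = u")
    case False thus ?thesis using x y e assms(5) by (auto simp: inj_on_def)
  next
    case True
    thus ?thesis
    proof
      assume xu: "x = u"
      show ?thesis proof (rule ccontr)
        assume "x \<noteq> y"
        hence "y \<in> W - {u}" "u' \<in> W - {u}" using y xu assms by auto
        moreover have "fst y = fst u'" using e xu assms(1) by simp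
        ultimately have "y = u'" using assms(5) by (auto simp: inj_on_def)
        thus False using y by simp
      qed
    next
      assume yu: "y = u"
      show ?thesis proof (rule ccontr)
        assume "x \<noteq> y"
        hence "x \<in> W - {u}" "u' \<in> W - {u}" using x yu assms by auto
        moreover have "fst x = fst u'" using e yu assms(1) by simp
        ultimately have "x = u'" using assms(5) by (auto simp: inj_on_def)
        thus False using x by simp
      qed
    qed
  qed
qed

lemma noninj_sum_aux:
  fixes W :: "(nat \<times> nat) set"
  assumes fin: "finite W" and uW: "u \<in> W" "u' \<in> W" and uu: "u < u'" and fu: "fst u = fst u'"
  shows "(\<Sum>w\<in>W. sg W w * (if inj_on fst (W - {w}) \<and> Q (fst ` (W - {w})) then c else 0)) = (0::'k::comm_ring_1)"
proof -
  define P where "P w \<longleftrightarrow> inj_on fst (W - {w}) \<and> Q (fst ` (W - {w}))" for w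
  have sub: "\<And>w. w \<in> W \<Longrightarrow> P w \<Longrightarrow> w = u \<or> w = u'"
  proof (rule ccontr)
    fix w assume "w \<in> W" "P w" "\<not> (w = u \<or> w = u')"
    hence "u \<in> W - {w}" "u' \<in> W - {w}" "inj_on fst (W - {w})" using uW P_def by auto
    thus False using fu uu by (auto simp: inj_on_def)
  qed
  have img: "fst ` (W - {u}) = fst ` (W - {u'})"
  proof -
    have ne: "u \<noteq> u'" using uu by simp
    have "fst ` (W - {u}) = fst ` W"
    proof
      show "fst ` W \<subseteq> fst ` (W - {u})"
      proof
        fix i assume "i \<in> fst ` W"
        then obtain w where w: "w \<in> W" "i = fst w" by auto
        show "i \<in> fst ` (W - {u})"
        proof (cases "w = u")
          case True thus ?thesis using w fu uW ne by (metis DiffI imageI singletonD)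
        next
          case False thus ?thesis using w by auto
        qed
      qed
    qed auto
    moreover have "fst ` (W - {u'}) = fst ` W"
    proof
      show "fst ` W \<subseteq> fst ` (W - {u'})"
      proof
        fix i assume "i \<in> fst ` W"
        then obtain w where w: "w \<in> W" "i = fst w" by auto
        show "i \<in> fst ` (W - {u'})"
        proof (cases "w = u'")
          case True thus ?thesis using w fu uW ne by (metis DiffI imageI singletonD)
        next
          case False thus ?thesis using w by auto
        qed
      qed
    qed auto
    ultimately show ?thesis by simp
  qed
  have Puu: "P u \<longleftrightarrow> P u'"
    unfolding P_def img using inj_swap[OF fu uW] inj_swap[OF fu[symmetric] uW(2) uW(1)] uu by auto
  show ?thesis
  proof (cases "P u")
    case False
    hence "\<And>w. w \<in> W \<Longrightarrow> \<not> P w" using sub Puu by blast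
    thus ?thesis unfolding P_def[symmetric] by simp
  next
    case True
    hence Pu': "P u'" using Puu by simp
    have between: "{v\<in>W. v < u'} = insert u {v\<in>W. v < u}"
    proof
      show "{v\<in>W. v < u'} \<subseteq> insert u {v\<in>W. v < u}"
      proof
        fix v assume v: "v \<in> {v\<in>W. v < u'}"
        show "v \<in> insert u {v\<in>W. v < u}"
        proof (rule ccontr)
          assume "v \<notin> insert u {v\<in>W. v < u}"
          hence "v \<noteq> u" "\<not> v < u" using v by auto
          hence "u < v" by auto
          hence "fst v = fst u" using v fu by (auto simp: less_prod_def')
          moreover have "v \<in> W - {u}" "u' \<in> W - {u}" using v \<open>v \<noteq> u\<close> uu uW by auto
          moreover have "v \<noteq> u'" using v by auto
          ultimately show False using True fu unfolding P_def inj_on_def by metis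
        qed
      qed
    next
      show "insert u {v\<in>W. v < u} \<subseteq> {v\<in>W. v < u'}" using uW uu by auto
    qed
    have "u \<notin> {v\<in>W. v < u}" by auto
    hence "card {v\<in>W. v < u'} = Suc (card {v\<in>W. v < u})" unfolding between using fin by simp
    hence sgs: "sg W u' = - (sg W u :: 'k)" by (simp add: sg_def)
    have "(\<Sum>w\<in>W. sg W w * (if P w then c else 0)) = (\<Sum>w\<in>{u,u'}. sg W w * (if P w then c else (0::'k)))"
      using fin uW sub by (intro sum.mono_neutral_right) auto
    also have "\<dots> = 0" using uu True Pu' sgs by simp
    finally show ?thesis unfolding P_def by simp
  qed
qed

lemma noninj_sum:
  fixes W :: "(nat \<times> nat) set"
  assumes fin: "finite W" and ni: "\<not> inj_on fst W"
  shows "(\<Sum>w\<in>W. sg W w * (if inj_on fst (W - {w}) \<and> Q (fst ` (W - {w})) then c else 0)) = (0::'k::comm_ring_1)"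
proof -
  obtain x y where xy: "x \<in> W" "y \<in> W" "fst x = fst y" "x \<noteq> y" using ni by (auto simp: inj_on_def)
  show ?thesis
  proof (cases "x < y")
    case True thus ?thesis using noninj_sum_aux[OF fin xy(1,2) True xy(3)] by simp
  next
    case False hence "y < x" using xy(4) by auto
    thus ?thesis using noninj_sum_aux[OF fin xy(2,1) _ xy(3)[symmetric]] by simp
  qed
qed


fun sig :: "cb \<Rightarrow> cb \<Rightarrow> 'k::comm_ring_1" where
  "sig (CF V) (CF V') = tsign V V'"
| "sig (CG W) (CG W') = tsign W W'"
| "sig (CG W) (CF V') = (if card W = 1 \<and> V' = {} then tsign W {} else 0)"
| "sig (CH W) (CF V') = (if inj_on fst W \<and> V' = fst ` W then 1 else 0)"
| "sig (CH W) (CG W') = (if W' = W then -1 else 0)"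
| "sig (CH W) (CH W') = - tsign W W'"
| "sig _ _ = 0"

lemma finite_GI [simp]: "finite (GI n)" by (simp add: GI_def)
lemma finite_GJ [simp]: "finite (GJ n a)" by (simp add: GJ_def)

lemma CF_in: "CF V \<in> cbasis n a j \<longleftrightarrow> (if j = 0 then V = {} else V \<subseteq> GI n \<and> card V = j)"
  by (auto simp: cbasis_def)
lemma CG_in: "CG W \<in> cbasis n a j \<longleftrightarrow> j \<noteq> 0 \<and> W \<subseteq> GJ n a \<and> card W = j"
  by (auto simp: cbasis_def)
lemma CH_in: "CH W \<in> cbasis n a j \<longleftrightarrow> 2 \<le> j \<and> W \<subseteq> GJ n a \<and> card W = j - 1"
  by (auto simp: cbasis_def)

lemma finite_cbasis [simp]: "finite (cbasis n a i)"
proof -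
  have f1: "finite {V. V \<subseteq> GI n \<and> card V = i}" by (rule finite_subset[of _ "Pow (GI n)"]) auto
  have f2: "\<And>k. finite {W. W \<subseteq> GJ n a \<and> card W = k}" by (rule finite_subset[of _ "Pow (GJ n a)"]) auto
  show ?thesis unfolding cbasis_def using f1 f2 by auto
qed

lemma cb_split: "B = CF ` (CF -` B) \<union> CG ` (CG -` B) \<union> CH ` (CH -` B)"
proof
  show "B \<subseteq> CF ` (CF -` B) \<union> CG ` (CG -` B) \<union> CH ` (CH -` B)"
  proof
    fix b assume "b \<in> B" thus "b \<in> CF ` (CF -` B) \<union> CG ` (CG -` B) \<union> CH ` (CH -` B)"
      by (cases b) auto
  qed
qed auto

lemma sum_cb:
  assumes "finite B"
  shows "(\<Sum>b\<in>B. g b) = (\<Sum>V\<in>CF -` B. g (CF V)) + (\<Sum>W\<in>CG -` B. g (CG W)) + (\<Sum>W\<in>CH -` B. g (CH W))"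
proof -
  have f1: "finite (CF -` B)" using assms by (rule finite_vimageI) (simp add: inj_def)
  have f2: "finite (CG -` B)" using assms by (rule finite_vimageI) (simp add: inj_def)
  have f3: "finite (CH -` B)" using assms by (rule finite_vimageI) (simp add: inj_def)
  have "(\<Sum>b\<in>B. g b) = (\<Sum>b\<in>CF ` (CF -` B) \<union> CG ` (CG -` B) \<union> CH ` (CH -` B). g b)"
    using cb_split[of B] by simp
  also have "\<dots> = (\<Sum>b\<in>CF ` (CF -` B) \<union> CG ` (CG -` B). g b) + (\<Sum>b\<in>CH ` (CH -` B). g b)"
    using f1 f2 f3 assms by (intro sum.union_disjoint) auto
  also have "(\<Sum>b\<in>CF ` (CF -` B) \<union> CG ` (CG -` B). g b) = (\<Sum>b\<in>CF ` (CF -` B). g b) + (\<Sum>b\<in>CG ` (CG -` B). g b)"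
    using f1 f2 assms by (intro sum.union_disjoint) auto
  also have "(\<Sum>b\<in>CF ` (CF -` B). g b) = (\<Sum>V\<in>CF -` B. g (CF V))"
    by (subst sum.reindex) (auto simp: inj_on_def)
  also have "(\<Sum>b\<in>CG ` (CG -` B). g b) = (\<Sum>V\<in>CG -` B. g (CG V))"
    by (subst sum.reindex) (auto simp: inj_on_def)
  also have "(\<Sum>b\<in>CH ` (CH -` B). g b) = (\<Sum>V\<in>CH -` B. g (CH V))"
    by (subst sum.reindex) (auto simp: inj_on_def)
  finally show ?thesis .
qed

lemma vCF: "CF -` cbasis n a j = {V. if j = 0 then V = {} else V \<subseteq> GI n \<and> card V = j}"
  using CF_in by blast
lemma vCG: "CG -` cbasis n a j = {W. j \<noteq> 0 \<and> W \<subseteq> GJ n a \<and> card W = j}"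
  using CG_in by blast
lemma vCH: "CH -` cbasis n a j = {W. 2 \<le> j \<and> W \<subseteq> GJ n a \<and> card W = j - 1}"
  using CH_in by blast

lemma finite_vCF [simp]: "finite (CF -` cbasis n a j)"
  by (rule finite_vimageI) (simp_all add: inj_def)
lemma finite_vCG [simp]: "finite (CG -` cbasis n a j)"
  by (rule finite_vimageI) (simp_all add: inj_def)
lemma finite_vCH [simp]: "finite (CH -` cbasis n a j)"
  by (rule finite_vimageI) (simp_all add: inj_def)

lemma tsign_single_empty: "tsign {w} {} = (1::'k::comm_ring_1)"
proof -
  have "tsign {w} {} = (sg {w} w :: 'k)" by (simp add: tsign_def)
  also have "\<dots> = 1" by (rule sg_min) auto
  finally show ?thesis .
qed

lemma dsum_CF:
  assumes "1 \<le> j" "CF V \<in> cbasis n a j"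
  shows "(\<Sum>b\<in>cbasis n a (j - 1). sig (CF V) b * f b) = (\<Sum>u\<in>V. sg V u * f (CF (V - {u})))"
proof -
  have V: "V \<subseteq> GI n" "card V = j" using assms CF_in[of V n a j] by auto
  hence fV: "finite V" using assms by (intro card_ge_0_finite) auto
  have "(\<Sum>b\<in>cbasis n a (j - 1). sig (CF V) b * f b) = (\<Sum>V'\<in>CF -` cbasis n a (j-1). tsign V V' * f (CF V'))"
    by (subst sum_cb) simp_all
  also have "\<dots> = (\<Sum>u\<in>V. sg V u * f (CF (V - {u})))"
  proof (rule tsign_sum[OF fV finite_vCF])
    fix u assume u: "u \<in> V"
    show "V - {u} \<in> CF -` cbasis n a (j - 1)"
    proof (cases "j = 1")
      case True
      hence "V = {u}" using V u by (metis card_1_singletonE singletonD)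
      thus ?thesis using True by (simp add: CF_in)
    next
      case False thus ?thesis using V u fV assms by (auto simp: CF_in)
    qed
  qed
  finally show ?thesis .
qed

lemma dsum_CG:
  assumes "1 \<le> j" "CG W \<in> cbasis n a j"
  shows "(\<Sum>b\<in>cbasis n a (j - 1). sig (CG W) b * f b)
     = (if card W = 1 then f (CF {}) else (\<Sum>w\<in>W. sg W w * f (CG (W - {w}))))"
proof -
  have W: "W \<subseteq> GJ n a" "card W = j" using assms CG_in[of W n a j] by auto
  hence fW: "finite W" using assms by (intro card_ge_0_finite) auto
  show ?thesis
  proof (cases "j = 1")
    case True
    then obtain w where w: "W = {w}" using W by (metis card_1_singletonE)
    have "cbasis n a (j - 1) = {CF {}}" using True by (simp add: cbasis_def)
    thus ?thesis using w True by (simp add: tsign_single_empty)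
  next
    case False
    have "(\<Sum>b\<in>cbasis n a (j - 1). sig (CG W) b * f b) = (\<Sum>W'\<in>CG -` cbasis n a (j-1). tsign W W' * f (CG W'))"
      using False W by (subst sum_cb) simp_all
    also have "\<dots> = (\<Sum>w\<in>W. sg W w * f (CG (W - {w})))"
    proof (rule tsign_sum[OF fW finite_vCG])
      fix u assume u: "u \<in> W"
      show "W - {u} \<in> CG -` cbasis n a (j - 1)" using W u fW assms False by (auto simp: CG_in)
    qed
    finally show ?thesis using False W by simp
  qed
qed

lemma dsum_CH:
  assumes "2 \<le> j" "CH W \<in> cbasis n a j"
  shows "(\<Sum>b\<in>cbasis n a (j - 1). sig (CH W) b * f b)
     = (if inj_on fst W then f (CF (fst ` W)) else 0) - f (CG W)
       - (if 2 \<le> card W then (\<Sum>w\<in>W. sg W w * f (CH (W - {w}))) else 0)"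
proof -
  have W: "W \<subseteq> GJ n a" "card W = j - 1" using assms CH_in[of W n a j] by auto
  hence fW: "finite W" using assms by (intro card_ge_0_finite) auto
  have p1: "(\<Sum>V'\<in>CF -` cbasis n a (j-1). sig (CH W) (CF V') * f (CF V'))
      = (if inj_on fst W then f (CF (fst ` W)) else 0)"
  proof -
    have "(\<Sum>V'\<in>CF -` cbasis n a (j-1). sig (CH W) (CF V') * f (CF V'))
        = (\<Sum>V'\<in>CF -` cbasis n a (j-1). if fst ` W = V' then (if inj_on fst W then f (CF V') else 0) else 0)"
      by (intro sum.cong refl) auto
    also have "\<dots> = (if fst ` W \<in> CF -` cbasis n a (j-1) then (if inj_on fst W then f (CF (fst ` W)) else 0) else 0)"
      by (rule sum.delta') simp
    also have "\<dots> = (if inj_on fst W then f (CF (fst ` W)) else 0)"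
    proof (cases "inj_on fst W")
      case True
      have "fst ` W \<subseteq> GI n" using W by (auto simp: GJ_def GI_def)
      moreover have "card (fst ` W) = card W" using True by (rule card_image)
      ultimately have "fst ` W \<in> CF -` cbasis n a (j-1)" using W assms by (auto simp: CF_in)
      thus ?thesis by simp
    qed simp
    finally show ?thesis .
  qed
  have p2: "(\<Sum>W'\<in>CG -` cbasis n a (j-1). sig (CH W) (CG W') * f (CG W')) = - f (CG W)"
  proof -
    have "(\<Sum>W'\<in>CG -` cbasis n a (j-1). sig (CH W) (CG W') * f (CG W'))
        = (\<Sum>W'\<in>CG -` cbasis n a (j-1). if W = W' then - f (CG W') else 0)"
      by (intro sum.cong refl) auto
    also have "\<dots> = - f (CG W)" using W assms by (subst sum.delta') (auto simp: CG_in)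
    finally show ?thesis .
  qed
  have p3: "(\<Sum>W'\<in>CH -` cbasis n a (j-1). sig (CH W) (CH W') * f (CH W'))
      = - (if 2 \<le> card W then (\<Sum>w\<in>W. sg W w * f (CH (W - {w}))) else 0)"
  proof (cases "2 \<le> card W")
    case True
    have "(\<Sum>W'\<in>CH -` cbasis n a (j-1). sig (CH W) (CH W') * f (CH W'))
        = - (\<Sum>W'\<in>CH -` cbasis n a (j-1). tsign W W' * f (CH W'))"
      by (simp add: sum_negf[symmetric])
    also have "(\<Sum>W'\<in>CH -` cbasis n a (j-1). tsign W W' * f (CH W')) = (\<Sum>w\<in>W. sg W w * f (CH (W - {w})))"
    proof (rule tsign_sum[OF fW finite_vCH])
      fix u assume u: "u \<in> W"
      show "W - {u} \<in> CH -` cbasis n a (j - 1)" using W u fW assms True by (auto simp: CH_in)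
    qed
    finally show ?thesis using True by simp
  next
    case False
    hence "CH -` cbasis n a (j-1) = {}" using W by (auto simp: CH_in)
    thus ?thesis using False by simp
  qed
  have e: "(\<Sum>b\<in>cbasis n a (j - 1). sig (CH W) b * f b) =
     (\<Sum>V'\<in>CF -` cbasis n a (j-1). sig (CH W) (CF V') * f (CF V'))
     + (\<Sum>W'\<in>CG -` cbasis n a (j-1). sig (CH W) (CG W') * f (CG W'))
     + (\<Sum>W'\<in>CH -` cbasis n a (j-1). sig (CH W) (CH W') * f (CH W'))"
    by (rule sum_cb) simp
  show ?thesis unfolding e p1 p2 p3 by simp
qed


lemma tsign_alt: "tsign U U' = (\<Sum>u\<in>U. sg U u * (if U' = U - {u} then 1 else (0::'k::comm_ring_1)))"
  unfolding tsign_def by (intro sum.cong refl) auto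

lemma tsign_single: "tsign {x} V2 = (if V2 = {} then 1 else (0::'k::comm_ring_1))"
  using tsign_single_empty[of x] by (auto simp: tsign_def)

lemma sum_neg_if: "(\<Sum>w\<in>W. sg W w * (if P w then - 1 else 0)) = - (\<Sum>w\<in>W. sg W w * (if P w then 1 else (0::'k::comm_ring_1)))"
  unfolding sum_negf[symmetric] by (intro sum.cong refl) simp

lemma sig_dd:
  assumes "1 \<le> i" "b0 \<in> cbasis n a (Suc i)" "b2 \<in> cbasis n a (i - 1)"
  shows "(\<Sum>b1\<in>cbasis n a i. sig b0 b1 * sig b1 b2) = (0::'k::comm_ring_1)"
proof (cases b0)
  case (CF V)
  have fV: "finite V" using assms CF CF_in[of V n a "Suc i"] by (intro card_ge_0_finite) auto
  have "(\<Sum>b1\<in>cbasis n a i. sig b0 b1 * sig b1 b2) = (\<Sum>u\<in>V. sg V u * (sig (CF (V - {u})) b2 :: 'k))"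
    using dsum_CF[of "Suc i" V n a "\<lambda>b1. sig b1 b2"] assms CF by simp
  also have "\<dots> = 0"
  proof (cases b2)
    case (CF V2) thus ?thesis using taylor_dd[OF fV] by simp
  qed simp_all
  finally show ?thesis .
next
  case (CG W)
  have W: "W \<subseteq> GJ n a" "card W = Suc i" using assms CG CG_in[of W n a "Suc i"] by auto
  have fW: "finite W" using W by (intro card_ge_0_finite) auto
  have "(\<Sum>b1\<in>cbasis n a i. sig b0 b1 * sig b1 b2) = (\<Sum>w\<in>W. sg W w * (sig (CG (W - {w})) b2 :: 'k))"
    using dsum_CG[of "Suc i" W n a "\<lambda>b1. sig b1 b2"] assms CG W by simp
  also have "\<dots> = 0"
  proof (cases b2)
    case (CG W2) thus ?thesis using taylor_dd[OF fW] by simp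
  next
    case (CF V2)
    show ?thesis
    proof (cases "card W = 2 \<and> V2 = {}")
      case True
      have "(\<Sum>w\<in>W. sg W w * (sig (CG (W - {w})) b2 :: 'k)) = (\<Sum>w\<in>W. sg W w * tsign (W - {w}) {})"
        using True fW CF by (intro sum.cong refl) auto
      thus ?thesis using taylor_dd[OF fW] by simp
    next
      case False
      have "\<And>w. w \<in> W \<Longrightarrow> (sig (CG (W - {w})) b2 :: 'k) = 0" using False fW CF by auto
      thus ?thesis by simp
    qed
  qed simp
  finally show ?thesis .
next
  case (CH W)
  have W: "W \<subseteq> GJ n a" "card W = i" using assms CH CH_in[of W n a "Suc i"] by auto
  have fW: "finite W" using W assms by (intro card_ge_0_finite) auto
  have "(\<Sum>b1\<in>cbasis n a i. sig b0 b1 * sig b1 b2) =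
     (if inj_on fst W then sig (CF (fst ` W)) b2 else 0) - sig (CG W) b2
       - (if 2 \<le> card W then (\<Sum>w\<in>W. sg W w * (sig (CH (W - {w})) b2 :: 'k)) else 0)"
    using dsum_CH[of "Suc i" W n a "\<lambda>b1. sig b1 b2"] assms CH W by simp
  also have "\<dots> = 0"
  proof (cases b2)
    case (CF V2)
    show ?thesis
    proof (cases "card W = 1")
      case True
      then obtain w where w: "W = {w}" by (metis card_1_singletonE)
      show ?thesis using CF w by (simp add: tsign_single tsign_single_empty)
    next
      case False
      hence c2: "2 \<le> card W" using W assms by auto
      have "(\<Sum>w\<in>W. sg W w * (sig (CH (W - {w})) b2 :: 'k))
          = (\<Sum>w\<in>W. sg W w * (if inj_on fst (W - {w}) \<and> (\<lambda>X. V2 = X) (fst ` (W - {w})) then 1 else 0))"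
        using CF by (intro sum.cong refl) auto
      also have "\<dots> = (if inj_on fst W then tsign (fst ` W) V2 else 0)"
      proof (cases "inj_on fst W")
        case True
        show ?thesis using inj_fst_sum[OF fW True, of "\<lambda>X. V2 = X" 1] True by (simp add: tsign_alt)
      next
        case False
        show ?thesis using noninj_sum[OF fW False, of "\<lambda>X. V2 = X" 1] False by simp
      qed
      finally show ?thesis using CF c2 False by simp
    qed
  next
    case (CG W2)
    have "card W \<noteq> 1" using CG assms(3) W CG_in[of W2 n a "i-1"] by auto
    hence c2: "2 \<le> card W" using W assms by auto
    have "(\<Sum>w\<in>W. sg W w * (sig (CH (W - {w})) b2 :: 'k)) = - tsign W W2"
      using CG by (simp add: sum_neg_if tsign_alt)
    thus ?thesis using CG c2 by simp
  next
    case (CH W2)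
    have "card W \<noteq> 1" using CH assms(3) W CH_in[of W2 n a "i-1"] by auto
    hence c2: "2 \<le> card W" using W assms by auto
    have "(\<Sum>w\<in>W. sg W w * (sig (CH (W - {w})) b2 :: 'k)) = - (\<Sum>w\<in>W. sg W w * tsign (W - {w}) W2)"
      using CH by (simp add: sum_negf[symmetric])
    thus ?thesis using CH c2 taylor_dd[OF fW] by simp
  qed
  finally show ?thesis .
qed


fun hmA :: "nat \<Rightarrow> cb \<Rightarrow> cb \<Rightarrow> 'k::comm_ring_1" where
  "hmA i0 (CF V) (CF V') = (if i0 \<notin> V \<and> V' = insert i0 V then 1 else 0)"
| "hmA i0 (CG W) (CF V') = (if inj_on fst W \<and> i0 \<notin> fst ` W \<and> V' = insert i0 (fst ` W) then 1 else 0)"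
| "hmA i0 (CG W) (CH W') = (if W' = W then -1 else 0)"
| "hmA _ _ _ = 0"

fun hmB :: "nat \<times> nat \<Rightarrow> cb \<Rightarrow> cb \<Rightarrow> 'k::comm_ring_1" where
  "hmB w0 (CF V) (CG W') = (if V = {} \<and> W' = {w0} then 1 else 0)"
| "hmB w0 (CG W) (CG W') = (if w0 \<notin> W \<and> W' = insert w0 W then 1 else 0)"
| "hmB _ _ _ = 0"

lemma rowA_CF:
  assumes "1 \<le> i" "CF V \<in> cbasis n a i" "i0 \<in> GI n"
  shows "(\<Sum>b1\<in>cbasis n a (Suc i). hmA i0 (CF V) b1 * g b1) = (if i0 \<notin> V then g (CF (insert i0 V)) else 0)"
proof -
  have V: "V \<subseteq> GI n" "card V = i" using assms CF_in[of V n a i] by auto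
  have fV: "finite V" using V assms by (intro card_ge_0_finite) auto
  have e: "(\<Sum>b1\<in>cbasis n a (Suc i). hmA i0 (CF V) b1 * g b1) =
     (\<Sum>V'\<in>CF -` cbasis n a (Suc i). hmA i0 (CF V) (CF V') * g (CF V'))
     + (\<Sum>W'\<in>CG -` cbasis n a (Suc i). hmA i0 (CF V) (CG W') * g (CG W'))
     + (\<Sum>W'\<in>CH -` cbasis n a (Suc i). hmA i0 (CF V) (CH W') * g (CH W'))"
    by (rule sum_cb) simp
  have "(\<Sum>V'\<in>CF -` cbasis n a (Suc i). hmA i0 (CF V) (CF V') * g (CF V'))
     = (\<Sum>V'\<in>CF -` cbasis n a (Suc i). if insert i0 V = V' then (if i0 \<notin> V then g (CF V') else 0) else 0)"
    by (intro sum.cong refl) auto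
  also have "\<dots> = (if i0 \<notin> V then g (CF (insert i0 V)) else 0)"
    using V fV assms by (subst sum.delta') (auto simp: CF_in)
  finally show ?thesis unfolding e by simp
qed

lemma rowA_CG:
  assumes "1 \<le> i" "CG W \<in> cbasis n a i" "i0 \<in> GI n"
  shows "(\<Sum>b1\<in>cbasis n a (Suc i). hmA i0 (CG W) b1 * g b1)
     = (if inj_on fst W \<and> i0 \<notin> fst ` W then g (CF (insert i0 (fst ` W))) else 0) - g (CH W)"
proof -
  have W: "W \<subseteq> GJ n a" "card W = i" using assms CG_in[of W n a i] by auto
  have fW: "finite W" using W assms by (intro card_ge_0_finite) auto
  have e: "(\<Sum>b1\<in>cbasis n a (Suc i). hmA i0 (CG W) b1 * g b1) =
     (\<Sum>V'\<in>CF -` cbasis n a (Suc i). hmA i0 (CG W) (CF V') * g (CF V'))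
     + (\<Sum>W'\<in>CG -` cbasis n a (Suc i). hmA i0 (CG W) (CG W') * g (CG W'))
     + (\<Sum>W'\<in>CH -` cbasis n a (Suc i). hmA i0 (CG W) (CH W') * g (CH W'))"
    by (rule sum_cb) simp
  have p1: "(\<Sum>V'\<in>CF -` cbasis n a (Suc i). hmA i0 (CG W) (CF V') * g (CF V'))
     = (if inj_on fst W \<and> i0 \<notin> fst ` W then g (CF (insert i0 (fst ` W))) else 0)"
  proof -
    have "(\<Sum>V'\<in>CF -` cbasis n a (Suc i). hmA i0 (CG W) (CF V') * g (CF V'))
     = (\<Sum>V'\<in>CF -` cbasis n a (Suc i). if insert i0 (fst ` W) = V' then (if inj_on fst W \<and> i0 \<notin> fst ` W then g (CF V') else 0) else 0)"
      by (intro sum.cong refl) auto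
    also have "\<dots> = (if inj_on fst W \<and> i0 \<notin> fst ` W then g (CF (insert i0 (fst ` W))) else 0)"
    proof (cases "inj_on fst W \<and> i0 \<notin> fst ` W")
      case True
      have "card (fst ` W) = card W" using True card_image by blast
      moreover have "fst ` W \<subseteq> GI n" using W by (auto simp: GJ_def GI_def)
      ultimately have "insert i0 (fst ` W) \<in> CF -` cbasis n a (Suc i)"
        using True W fW assms by (auto simp: CF_in)
      thus ?thesis using True by (subst sum.delta') auto
    qed auto
    finally show ?thesis .
  qed
  have p3: "(\<Sum>W'\<in>CH -` cbasis n a (Suc i). hmA i0 (CG W) (CH W') * g (CH W')) = - g (CH W)"
  proof -
    have "(\<Sum>W'\<in>CH -` cbasis n a (Suc i). hmA i0 (CG W) (CH W') * g (CH W'))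
        = (\<Sum>W'\<in>CH -` cbasis n a (Suc i). if W = W' then - g (CH W') else 0)"
      by (intro sum.cong refl) auto
    also have "\<dots> = - g (CH W)" using W assms by (subst sum.delta') (auto simp: CH_in)
    finally show ?thesis .
  qed
  show ?thesis unfolding e p1 p3 by simp
qed

lemma rowA_CH: "(\<Sum>b1\<in>B. hmA i0 (CH W) b1 * g b1) = 0"
  by simp

lemma homA:
  assumes i1: "1 \<le> i" and b0: "b0 \<in> cbasis n a i" and b2: "b2 \<in> cbasis n a i" and i0: "i0 \<in> GI n"
    and okF: "\<And>V v. b0 = CF V \<Longrightarrow> v \<in> V \<Longrightarrow> i0 \<le> v"
    and okG: "\<And>W p. b0 = CG W \<Longrightarrow> p \<in> W \<Longrightarrow> i0 \<le> fst p"
  shows "(\<Sum>b1\<in>cbasis n a (Suc i). hmA i0 b0 b1 * sig b1 b2)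
       + (\<Sum>b1\<in>cbasis n a (i - 1). sig b0 b1 * hmA i0 b1 b2)
       = (if b0 = b2 then 1 else (0::'k::comm_ring_1))"
proof (cases b0)
  case (CF V)
  have V: "V \<subseteq> GI n" "card V = i" using b0 CF CF_in[of V n a i] i1 by auto
  have fV: "finite V" using V i1 by (intro card_ge_0_finite) auto
  have R: "(\<Sum>b1\<in>cbasis n a (Suc i). hmA i0 b0 b1 * sig b1 b2) = (if i0 \<notin> V then sig (CF (insert i0 V)) b2 else 0)"
    using rowA_CF[OF i1 _ i0, of V a "\<lambda>b1. sig b1 b2"] b0 CF by simp
  have D: "(\<Sum>b1\<in>cbasis n a (i - 1). sig b0 b1 * hmA i0 b1 b2) = (\<Sum>u\<in>V. sg V u * (hmA i0 (CF (V - {u})) b2 :: 'k))"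
    using dsum_CF[OF i1, of V n a "\<lambda>b1. hmA i0 b1 b2"] b0 CF by simp
  show ?thesis
  proof (cases b2)
    case (CF V2)
    have "(if i0 \<notin> V then tsign (insert i0 V) V2 else 0)
         + (\<Sum>u\<in>V. sg V u * (if i0 \<notin> V - {u} \<and> V2 = insert i0 (V - {u}) then 1 else 0))
         = (if V2 = V then 1 else (0::'k))"
      by (rule taylor_cone[OF fV]) (use okF[OF \<open>b0 = CF V\<close>] in blast)
    thus ?thesis unfolding R D using CF \<open>b0 = CF V\<close> by (auto simp: eq_commute)
  next
    case (CG W2) show ?thesis unfolding R D using CG \<open>b0 = CF V\<close> by simp
  next
    case (CH W2) show ?thesis unfolding R D using CH \<open>b0 = CF V\<close> by simp
  qed
next
  case (CG W)
  have W: "W \<subseteq> GJ n a" "card W = i" using b0 CG CG_in[of W n a i] by auto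
  have fW: "finite W" using W i1 by (intro card_ge_0_finite) auto
  have R: "(\<Sum>b1\<in>cbasis n a (Suc i). hmA i0 b0 b1 * sig b1 b2)
      = (if inj_on fst W \<and> i0 \<notin> fst ` W then sig (CF (insert i0 (fst ` W))) b2 else 0) - sig (CH W) b2"
    using rowA_CG[OF i1 _ i0, of W a "\<lambda>b1. sig b1 b2"] b0 CG by simp
  have D: "(\<Sum>b1\<in>cbasis n a (i - 1). sig b0 b1 * hmA i0 b1 b2)
     = (if card W = 1 then hmA i0 (CF {}) b2 else (\<Sum>w\<in>W. sg W w * (hmA i0 (CG (W - {w})) b2 :: 'k)))"
    using dsum_CG[OF i1, of W n a "\<lambda>b1. hmA i0 b1 b2"] b0 CG by simp
  show ?thesis
  proof (cases b2)
    case (CF V2)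
    define Q where "Q X \<longleftrightarrow> i0 \<notin> X \<and> V2 = insert i0 X" for X
    have ok: "\<And>u. u \<in> fst ` W \<Longrightarrow> i0 \<le> u" using okG CG by auto
    have Dv: "(\<Sum>b1\<in>cbasis n a (i - 1). sig b0 b1 * hmA i0 b1 b2)
       = (if inj_on fst W then (\<Sum>u\<in>fst ` W. sg (fst ` W) u * (if Q (fst ` W - {u}) then 1 else (0::'k))) else 0)"
    proof (cases "card W = 1")
      case True
      then obtain w where w: "W = {w}" by (metis card_1_singletonE)
      have "sg {fst w} (fst w) = (1::'k)" by (rule sg_min) auto
      thus ?thesis unfolding D using w CF by (simp add: Q_def)
    next
      case False
      have "(\<Sum>w\<in>W. sg W w * (hmA i0 (CG (W - {w})) b2 :: 'k))
        = (\<Sum>w\<in>W. sg W w * (if inj_on fst (W - {w}) \<and> Q (fst ` (W - {w})) then 1 else 0))"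
        using CF by (intro sum.cong refl) (auto simp: Q_def)
      also have "\<dots> = (if inj_on fst W then (\<Sum>u\<in>fst ` W. sg (fst ` W) u * (if Q (fst ` W - {u}) then 1 else 0)) else 0)"
        using inj_fst_sum[OF fW, of Q 1] noninj_sum[OF fW, of Q 1] by auto
      finally show ?thesis unfolding D using False by simp
    qed
    show ?thesis
    proof (cases "inj_on fst W")
      case True
      have fF: "finite (fst ` W)" using fW by simp
      have "(if i0 \<notin> fst ` W then tsign (insert i0 (fst ` W)) V2 else 0)
         + (\<Sum>u\<in>fst ` W. sg (fst ` W) u * (if i0 \<notin> fst ` W - {u} \<and> V2 = insert i0 (fst ` W - {u}) then 1 else 0))
         = (if V2 = fst ` W then 1 else (0::'k))"
        by (rule taylor_cone[OF fF ok])
      then obtain A S where AS: "A + S = (if V2 = fst ` W then 1 else (0::'k))"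
        "A = (if i0 \<notin> fst ` W then tsign (insert i0 (fst ` W)) V2 else 0)"
        "S = (\<Sum>u\<in>fst ` W. sg (fst ` W) u * (if i0 \<notin> fst ` W - {u} \<and> V2 = insert i0 (fst ` W - {u}) then 1 else (0::'k)))"
        by blast
      have S2: "(\<Sum>u\<in>fst ` W. sg (fst ` W) u * (if Q (fst ` W - {u}) then 1 else (0::'k))) = S"
        unfolding AS(3) Q_def by simp
      have A2: "(if inj_on fst W \<and> i0 \<notin> fst ` W then sig (CF (insert i0 (fst ` W))) b2 else 0) = A"
        unfolding AS(2) using True CF by simp
      have C2: "(sig (CH W) b2 :: 'k) = (if V2 = fst ` W then 1 else 0)" using True CF by simp
      have "(\<Sum>b1\<in>cbasis n a (Suc i). hmA i0 b0 b1 * sig b1 b2)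
       + (\<Sum>b1\<in>cbasis n a (i - 1). sig b0 b1 * hmA i0 b1 b2) = A - (if V2 = fst ` W then 1 else 0) + S"
        unfolding R Dv A2 C2 S2 using True by simp
      also have "\<dots> = 0" using AS(1) by (simp add: algebra_simps)
      finally show ?thesis using CF CG by simp
    next
      case False
      thus ?thesis unfolding R Dv using CF CG by simp
    qed
  next
    case (CG W2)
    show ?thesis unfolding R D using CG \<open>b0 = CG W\<close> by auto
  next
    case (CH W2)
    have "card W \<noteq> 1" using CH b2 W CH_in[of W2 n a i] by auto
    have "(\<Sum>w\<in>W. sg W w * (hmA i0 (CG (W - {w})) b2 :: 'k)) = - tsign W W2"
      using CH by (simp add: sum_neg_if tsign_alt eq_commute)
    thus ?thesis unfolding R D using CH \<open>card W \<noteq> 1\<close> \<open>b0 = CG W\<close> by simp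
  qed
next
  case (CH W)
  have W: "W \<subseteq> GJ n a" "card W = i - 1" "2 \<le> i" using b0 CH CH_in[of W n a i] by auto
  have D: "(\<Sum>b1\<in>cbasis n a (i - 1). sig (CH W) b1 * hmA i0 b1 b2)
     = (if inj_on fst W then hmA i0 (CF (fst ` W)) b2 else 0) - hmA i0 (CG W) b2
       - (if 2 \<le> card W then (\<Sum>w\<in>W. sg W w * (hmA i0 (CH (W - {w})) b2 :: 'k)) else 0)"
    using dsum_CH[OF W(3), of W n a "\<lambda>b1. hmA i0 b1 b2"] b0 CH by simp
  show ?thesis unfolding CH D by (cases b2) auto
qed

lemma rowB_CG:
  assumes "1 \<le> i" "CG W \<in> cbasis n a i" "w0 \<in> GJ n a"
  shows "(\<Sum>b1\<in>cbasis n a (Suc i). hmB w0 (CG W) b1 * g b1) = (if w0 \<notin> W then g (CG (insert w0 W)) else 0)"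
proof -
  have W: "W \<subseteq> GJ n a" "card W = i" using assms CG_in[of W n a i] by auto
  have fW: "finite W" using W assms by (intro card_ge_0_finite) auto
  have e: "(\<Sum>b1\<in>cbasis n a (Suc i). hmB w0 (CG W) b1 * g b1) =
     (\<Sum>V'\<in>CF -` cbasis n a (Suc i). hmB w0 (CG W) (CF V') * g (CF V'))
     + (\<Sum>W'\<in>CG -` cbasis n a (Suc i). hmB w0 (CG W) (CG W') * g (CG W'))
     + (\<Sum>W'\<in>CH -` cbasis n a (Suc i). hmB w0 (CG W) (CH W') * g (CH W'))"
    by (rule sum_cb) simp
  have "(\<Sum>W'\<in>CG -` cbasis n a (Suc i). hmB w0 (CG W) (CG W') * g (CG W'))
     = (\<Sum>W'\<in>CG -` cbasis n a (Suc i). if insert w0 W = W' then (if w0 \<notin> W then g (CG W') else 0) else 0)"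
    by (intro sum.cong refl) auto
  also have "\<dots> = (if w0 \<notin> W then g (CG (insert w0 W)) else 0)"
    using W fW assms by (subst sum.delta') (auto simp: CG_in)
  finally show ?thesis unfolding e by simp
qed

lemma homB:
  assumes i1: "1 \<le> i" and b0: "CG W \<in> cbasis n a i" and b2: "b2 \<in> cbasis n a i" and w0: "w0 \<in> GJ n a"
    and ok: "\<And>w. w \<in> W \<Longrightarrow> w0 \<le> w"
  shows "(\<Sum>b1\<in>cbasis n a (Suc i). hmB w0 (CG W) b1 * sig b1 b2)
       + (\<Sum>b1\<in>cbasis n a (i - 1). sig (CG W) b1 * hmB w0 b1 b2)
       = (if CG W = b2 then 1 else (0::'k::comm_ring_1))"
proof -
  have W: "W \<subseteq> GJ n a" "card W = i" using b0 CG_in[of W n a i] by auto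
  have fW: "finite W" using W i1 by (intro card_ge_0_finite) auto
  have R: "(\<Sum>b1\<in>cbasis n a (Suc i). hmB w0 (CG W) b1 * sig b1 b2) = (if w0 \<notin> W then sig (CG (insert w0 W)) b2 else 0)"
    using rowB_CG[OF i1 b0 w0, of "\<lambda>b1. sig b1 b2"] by simp
  have D: "(\<Sum>b1\<in>cbasis n a (i - 1). sig (CG W) b1 * hmB w0 b1 b2)
     = (if card W = 1 then hmB w0 (CF {}) b2 else (\<Sum>w\<in>W. sg W w * (hmB w0 (CG (W - {w})) b2 :: 'k)))"
    using dsum_CG[OF i1 b0, of "\<lambda>b1. hmB w0 b1 b2"] by simp
  show ?thesis
  proof (cases b2)
    case (CG W2)
    have Dv: "(\<Sum>b1\<in>cbasis n a (i - 1). sig (CG W) b1 * hmB w0 b1 b2)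
       = (\<Sum>u\<in>W. sg W u * (if w0 \<notin> W - {u} \<and> W2 = insert w0 (W - {u}) then 1 else (0::'k)))"
    proof (cases "card W = 1")
      case True
      then obtain w where w: "W = {w}" by (metis card_1_singletonE)
      have "sg {w} w = (1::'k)" by (rule sg_min) auto
      thus ?thesis unfolding D using w CG by auto
    next
      case False
      show ?thesis unfolding D using False CG by simp
    qed
    have "(if w0 \<notin> W then tsign (insert w0 W) W2 else 0)
         + (\<Sum>u\<in>W. sg W u * (if w0 \<notin> W - {u} \<and> W2 = insert w0 (W - {u}) then 1 else 0))
         = (if W2 = W then 1 else (0::'k))"
      by (rule taylor_cone[OF fW ok])
    thus ?thesis unfolding R Dv using CG by (auto simp: eq_commute)
  next
    case (CF V2)
    have "V2 \<noteq> {}" using CF b2 i1 CF_in[of V2 n a i] by auto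
    thus ?thesis unfolding R D using CF by auto
  next
    case (CH W2)
    thus ?thesis unfolding R D by auto
  qed
qed


lemma single_power: "(Poly_Mapping.single m (c::'k::comm_ring_1)) ^ k = Poly_Mapping.single (of_nat k * m) (c ^ k)"
  for m :: "'a::comm_monoid_add \<Rightarrow>\<^sub>0 nat"
proof (induction k)
  case 0 thus ?case by simp
next
  case (Suc k)
  thus ?case by (simp add: mult_single algebra_simps)
qed

lemma Var_power: "(Var v :: 'k::field qpoly) ^ k = Poly_Mapping.single (Poly_Mapping.single v k) 1"
proof (induction k)
  case 0 thus ?case by simp
next
  case (Suc k)
  have "(Var v :: 'k qpoly) ^ Suc k = Poly_Mapping.single (Poly_Mapping.single v 1) 1 * Poly_Mapping.single (Poly_Mapping.single v k) 1"
    using Suc by (simp add: Var_def)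
  also have "\<dots> = Poly_Mapping.single (Poly_Mapping.single v (Suc k)) 1"
    by (simp add: mult_single single_add[symmetric])
  finally show ?case .
qed

lemma prod_single: "finite A \<Longrightarrow> (\<Prod>v\<in>A. Poly_Mapping.single (f v) (1::'k::comm_ring_1)) = Poly_Mapping.single (\<Sum>v\<in>A. f v) 1"
  for f :: "'b \<Rightarrow> var \<Rightarrow>\<^sub>0 nat"
  by (induction A rule: finite_induct) (simp_all add: mult_single add.commute)

lemma mono_eq:
  assumes "finite {v. e v \<noteq> 0}"
  shows "(mono e :: 'k::field qpoly) = Poly_Mapping.single (Abs_poly_mapping e) 1"
proof -
  have "(mono e :: 'k qpoly) = (\<Prod>v\<in>{v. e v \<noteq> 0}. Poly_Mapping.single (Poly_Mapping.single v (e v)) 1)"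
    unfolding mono_def Var_power by simp
  also have "\<dots> = Poly_Mapping.single (\<Sum>v\<in>{v. e v \<noteq> 0}. Poly_Mapping.single v (e v)) 1"
    using assms by (rule prod_single)
  also have "(\<Sum>v\<in>{v. e v \<noteq> 0}. Poly_Mapping.single v (e v)) = Abs_poly_mapping e"
  proof (rule poly_mapping_eqI)
    fix k
    have "Poly_Mapping.lookup (\<Sum>v\<in>{v. e v \<noteq> 0}. Poly_Mapping.single v (e v)) k = (\<Sum>v\<in>{v. e v \<noteq> 0}. if v = k then e v else 0)"
      unfolding lookup_sum by (intro sum.cong refl) (simp add: lookup_single when_def)
    also have "\<dots> = e k" using assms by (simp add: sum.delta)
    finally show "Poly_Mapping.lookup (\<Sum>v\<in>{v. e v \<noteq> 0}. Poly_Mapping.single v (e v)) k = Poly_Mapping.lookup (Abs_poly_mapping e) k"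
      using assms by simp
  qed
  finally show ?thesis .
qed

lemma sub_add_iff:
  fixes t m l :: "var \<Rightarrow>\<^sub>0 nat"
  assumes "\<forall>v. Poly_Mapping.lookup m v \<le> Poly_Mapping.lookup t v"
  shows "t = l + m \<longleftrightarrow> l = t - m"
proof
  assume "t = l + m" thus "l = t - m" by (intro poly_mapping_eqI) (simp add: lookup_add lookup_minus)
next
  assume "l = t - m" thus "t = l + m" using assms by (intro poly_mapping_eqI) (simp add: lookup_add lookup_minus)
qed

lemma lookup_mult_single:
  fixes p :: "'k::comm_ring_1 qpoly" and m t :: "var \<Rightarrow>\<^sub>0 nat"
  shows "Poly_Mapping.lookup (p * Poly_Mapping.single m c) t = (if (\<forall>v. Poly_Mapping.lookup m v \<le> Poly_Mapping.lookup t v) then Poly_Mapping.lookup p (t - m) * c else 0)"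
proof -
  have inner: "\<And>l. (\<Sum>q. Poly_Mapping.lookup (Poly_Mapping.single m c) q when t = l + q) = (c when t = l + m)"
  proof -
    fix l
    have "(\<Sum>q. Poly_Mapping.lookup (Poly_Mapping.single m c) q when t = l + q) = (\<Sum>q. (c when t = l + q) when q = m)"
      by (intro Sum_any.cong) (auto simp: lookup_single when_def)
    also have "\<dots> = (c when t = l + m)" by simp
    finally show "(\<Sum>q. Poly_Mapping.lookup (Poly_Mapping.single m c) q when t = l + q) = (c when t = l + m)" .
  qed
  have "Poly_Mapping.lookup (p * Poly_Mapping.single m c) t = (\<Sum>l. Poly_Mapping.lookup p l * (c when t = l + m))"
    by (simp add: lookup_mult inner)
  also have "\<dots> = (if (\<forall>v. Poly_Mapping.lookup m v \<le> Poly_Mapping.lookup t v) then Poly_Mapping.lookup p (t - m) * c else 0)"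
  proof (cases "\<forall>v. Poly_Mapping.lookup m v \<le> Poly_Mapping.lookup t v")
    case True
    have "(\<Sum>l. Poly_Mapping.lookup p l * (c when t = l + m)) = (\<Sum>l. (Poly_Mapping.lookup p l * c) when l = t - m)"
      by (intro Sum_any.cong) (simp add: sub_add_iff[OF True] when_def)
    thus ?thesis using True by simp
  next
    case False
    then obtain v where v: "Poly_Mapping.lookup t v < Poly_Mapping.lookup m v" by (auto simp: not_le)
    have "\<And>l. t \<noteq> l + m"
    proof
      fix l assume "t = l + m"
      hence "Poly_Mapping.lookup t v = Poly_Mapping.lookup l v + Poly_Mapping.lookup m v" by (simp add: lookup_add)
      thus False using v by simp
    qed
    thus ?thesis using False by auto
  qed
  finally show ?thesis .
qed


lemma mexp_01:
  assumes "finite U" "\<And>u. g u v \<le> 1"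
  shows "mexp g U v = (if \<exists>u\<in>U. g u v \<noteq> 0 then 1 else 0)"
proof (cases "\<exists>u\<in>U. g u v \<noteq> 0")
  case True
  then obtain u where u: "u \<in> U" "g u v \<noteq> 0" by auto
  hence "g u v = 1" using assms(2)[of u] by simp
  moreover have "1 \<in> (\<lambda>u. g u v) ` U" using u \<open>g u v = 1\<close> by (metis imageI)
  ultimately have "Max (insert 0 ((\<lambda>u. g u v) ` U)) = 1"
    using u assms by (intro Max_eqI) auto
  thus ?thesis using True by (simp add: mexp_def)
next
  case False
  hence e: "insert 0 ((\<lambda>u. g u v) ` U) = {0}" by auto
  have "mexp g U v = 0" unfolding mexp_def by (metis e Max_singleton)
  thus ?thesis using False by simp
qed

lemma gI_le: "gI i v \<le> 1" by (simp add: gI_def)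
lemma gJ_le: "gJ p v \<le> 1" by (simp add: gJ_def)

lemma eF: "finite V \<Longrightarrow> mexp gI V v = (if (v = Zv \<and> V \<noteq> {}) \<or> (\<exists>i\<in>V. v = Xv i) then 1 else 0)"
  by (subst mexp_01) (auto simp: gI_def gI_le)

lemma eG: "finite W \<Longrightarrow> mexp gJ W v = (if \<exists>p\<in>W. v = Xv (fst p) \<or> v = Yv (fst p) (snd p) then 1 else 0)"
  by (subst mexp_01) (auto simp: gJ_def gJ_le)


lemma mexp_empty [simp]: "mexp g {} = (\<lambda>v. 0)"
  by (simp add: mexp_def)

fun dg :: "cb \<Rightarrow> var \<Rightarrow> nat" where
  "dg (CF V) = mexp gI V"
| "dg (CG W) = mexp gJ W"
| "dg (CH W) = (\<lambda>v. mexp gJ W v + (if v = Zv then 1 else 0))"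

fun fcb :: "cb \<Rightarrow> bool" where
  "fcb (CF V) = finite V" | "fcb (CG W) = finite W" | "fcb (CH W) = finite W"

lemma fin_subGI: "V \<subseteq> GI n \<Longrightarrow> finite V" by (metis finite_subset finite_GI)
lemma fin_subGJ: "W \<subseteq> GJ n a \<Longrightarrow> finite W" by (metis finite_subset finite_GJ)

lemma cbasis_fcb: "b \<in> cbasis n a i \<Longrightarrow> fcb b"
proof (cases b)
  case (CF V) assume "b \<in> cbasis n a i" thus ?thesis using CF CF_in[of V n a i] by (auto split: if_splits intro: fin_subGI)
next
  case (CG W) assume "b \<in> cbasis n a i" thus ?thesis using CG CG_in[of W n a i] by (auto intro: fin_subGJ)
next
  case (CH W) assume "b \<in> cbasis n a i" thus ?thesis using CH CH_in[of W n a i] by (auto intro: fin_subGJ)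
qed

lemma fin_supp_F:
  assumes "finite V" shows "finite {v. mexp gI V v \<noteq> 0}"
proof (rule finite_subset[of _ "insert Zv (Xv ` V)"])
  show "{v. mexp gI V v \<noteq> 0} \<subseteq> insert Zv (Xv ` V)"
  proof
    fix v assume "v \<in> {v. mexp gI V v \<noteq> 0}"
    hence "(v = Zv \<and> V \<noteq> {}) \<or> (\<exists>i\<in>V. v = Xv i)" using eF[OF assms, of v] by (simp split: if_splits)
    thus "v \<in> insert Zv (Xv ` V)" by blast
  qed
qed (use assms in simp)

lemma fin_supp_G:
  assumes "finite W" shows "finite {v. mexp gJ W v \<noteq> 0}"
proof (rule finite_subset[of _ "Xv ` fst ` W \<union> (\<lambda>p. Yv (fst p) (snd p)) ` W"])
  show "{v. mexp gJ W v \<noteq> 0} \<subseteq> Xv ` fst ` W \<union> (\<lambda>p. Yv (fst p) (snd p)) ` W"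
  proof
    fix v assume "v \<in> {v. mexp gJ W v \<noteq> 0}"
    hence "\<exists>p\<in>W. v = Xv (fst p) \<or> v = Yv (fst p) (snd p)" using eG[OF assms, of v] by (simp split: if_splits)
    thus "v \<in> Xv ` fst ` W \<union> (\<lambda>p. Yv (fst p) (snd p)) ` W" by blast
  qed
qed (use assms in simp)

lemma dg_fin: "fcb b \<Longrightarrow> finite {v. dg b v \<noteq> 0}"
proof (cases b)
  case (CF V)
  assume "fcb b" thus ?thesis using CF fin_supp_F[of V] by simp
next
  case (CG W)
  assume "fcb b" thus ?thesis using CG fin_supp_G[of W] by simp
next
  case (CH W)
  assume "fcb b"
  hence "finite W" using CH by simp
  hence "finite (insert Zv {v. mexp gJ W v \<noteq> 0})" using fin_supp_G by simp
  moreover have "{v. dg b v \<noteq> 0} \<subseteq> insert Zv {v. mexp gJ W v \<noteq> 0}" using CH by auto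
  ultimately show ?thesis using finite_subset by blast
qed


definition dm :: "cb \<Rightarrow> var \<Rightarrow>\<^sub>0 nat" where "dm b = Abs_poly_mapping (dg b)"

lemma lookup_dm: "fcb b \<Longrightarrow> Poly_Mapping.lookup (dm b) = dg b"
  unfolding dm_def using dg_fin by simp

lemma single_sum: "(\<Sum>u\<in>A. Poly_Mapping.single M (f u)) = Poly_Mapping.single M (\<Sum>u\<in>A. f u)"
  by (induction A rule: infinite_finite_induct) (simp_all add: single_add)

lemma negpow_single: "((-1::'k::comm_ring_1 qpoly) ^ c) * Poly_Mapping.single M d = Poly_Mapping.single M ((-1) ^ c * d)"
proof -
  have "(-1::'k qpoly) = Poly_Mapping.single 0 (-1)" by (simp add: single_uminus)
  moreover have "\<And>c. (Poly_Mapping.single 0 (-1) :: 'k qpoly) ^ c = Poly_Mapping.single 0 ((-1) ^ c)"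
  proof -
    fix c show "(Poly_Mapping.single 0 (-1) :: 'k qpoly) ^ c = Poly_Mapping.single 0 ((-1) ^ c)"
      by (induction c) (simp_all add: mult_single)
  qed
  ultimately have "(-1::'k qpoly) ^ c = Poly_Mapping.single 0 ((-1) ^ c)" by simp
  thus ?thesis by (simp add: mult_single)
qed

lemma taylor_fact:
  assumes "finite U" "\<And>u v. g u v \<le> 1" "finite {v. mexp g U v \<noteq> 0}"
  shows "(taylor_entry g U U' :: 'k::field qpoly)
     = Poly_Mapping.single (Abs_poly_mapping (\<lambda>x. mexp g U x - mexp g U' x)) (tsign U U')"
proof -
  have fin: "finite {x. mexp g U x - mexp g U' x \<noteq> 0}"
    by (rule finite_subset[OF _ assms(3)]) auto
  have "(taylor_entry g U U' :: 'k qpoly) = (\<Sum>u\<in>U. Poly_Mapping.single (Abs_poly_mapping (\<lambda>x. mexp g U x - mexp g U' x)) (if U' = U - {u} then sg U u else 0))"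
    unfolding taylor_entry_def
  proof (intro sum.cong refl)
    fix u assume "u \<in> U"
    show "(if U' = U - {u} then (-1) ^ card {v \<in> U. v < u} * mono (\<lambda>x. mexp g U x - mexp g (U - {u}) x) else (0::'k qpoly))
      = Poly_Mapping.single (Abs_poly_mapping (\<lambda>x. mexp g U x - mexp g U' x)) (if U' = U - {u} then sg U u else 0)"
      using fin by (auto simp: mono_eq negpow_single sg_def)
  qed
  also have "\<dots> = Poly_Mapping.single (Abs_poly_mapping (\<lambda>x. mexp g U x - mexp g U' x)) (tsign U U')"
    by (simp add: single_sum tsign_def)
  finally show ?thesis .
qed

lemma Abs_minus:
  assumes "fcb b" "fcb b'"
  shows "Abs_poly_mapping (\<lambda>v. dg b v - dg b' v) = dm b - dm b'"
proof (rule poly_mapping_eqI)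
  fix k
  have "finite {v. dg b v - dg b' v \<noteq> 0}" by (rule finite_subset[OF _ dg_fin[OF assms(1)]]) auto
  thus "Poly_Mapping.lookup (Abs_poly_mapping (\<lambda>v. dg b v - dg b' v)) k = Poly_Mapping.lookup (dm b - dm b') k"
    using assms by (simp add: lookup_minus lookup_dm)
qed

lemma yW_fact:
  assumes "finite W" "W \<noteq> {}"
  shows "(yW W :: 'k::field qpoly) = Poly_Mapping.single (Abs_poly_mapping (\<lambda>v. dg (CH W) v - dg (CF (fst ` W)) v)) 1"
proof -
  have eq: "(\<lambda>v. if \<exists>p\<in>W. v = Yv (fst p) (snd p) then 1 else 0) = (\<lambda>v. dg (CH W) v - dg (CF (fst ` W)) v)"
  proof
    fix v show "(if \<exists>p\<in>W. v = Yv (fst p) (snd p) then 1 else 0) = dg (CH W) v - dg (CF (fst ` W)) v"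
      using assms by (cases v) (auto simp: eF eG)
  qed
  have "finite {v. dg (CH W) v - dg (CF (fst ` W)) v \<noteq> 0}"
    by (rule finite_subset[OF _ dg_fin[of "CH W"]]) (use assms in auto)
  thus ?thesis unfolding yW_def eq by (simp add: mono_eq)
qed

lemma cdiff_fact:
  assumes i: "1 \<le> i" and b: "b \<in> cbasis n a i" and b': "b' \<in> cbasis n a (i - 1)"
  shows "(cdiff b b' :: 'k::field qpoly) = Poly_Mapping.single (dm b - dm b') (sig b b')"
proof -
  have fb: "fcb b" and fb': "fcb b'" using b b' cbasis_fcb by auto
  have key: "(cdiff b b' :: 'k qpoly) = Poly_Mapping.single (Abs_poly_mapping (\<lambda>v. dg b v - dg b' v)) (sig b b')"
  proof (cases b)
    case (CF V)
    have fV: "finite V" using fb CF by simp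
    show ?thesis
    proof (cases b')
      case (CF V')
      thus ?thesis using \<open>b = CF V\<close> taylor_fact[OF fV gI_le fin_supp_F[OF fV], where 'k='k] by simp
    qed (simp_all add: CF)
  next
    case (CG W)
    have fW: "finite W" using fb CG by simp
    show ?thesis
    proof (cases b')
      case (CG W')
      thus ?thesis using \<open>b = CG W\<close> taylor_fact[OF fW gJ_le fin_supp_G[OF fW], where 'k='k] by simp
    next
      case (CF V')
      have "(taylor_entry gJ W {} :: 'k qpoly) = Poly_Mapping.single (Abs_poly_mapping (\<lambda>x. mexp gJ W x - mexp gJ {} x)) (tsign W {})"
        by (rule taylor_fact[OF fW gJ_le fin_supp_G[OF fW]])
      thus ?thesis using \<open>b = CG W\<close> CF by simp
    qed (simp_all add: CG)
  next
    case (CH W)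
    have fW: "finite W" using fb CH by simp
    have Wne: "W \<noteq> {}" using b CH CH_in[of W n a i] by auto
    show ?thesis
    proof (cases b')
      case (CF V')
      thus ?thesis using \<open>b = CH W\<close> yW_fact[OF fW Wne, where 'k='k] by (simp add: Phi_entry_def)
    next
      case (CG W')
      have e: "(\<lambda>v. dg (CH W) v - dg (CG W) v) = (\<lambda>v. if v = Zv then 1 else 0)" by auto
      have "(Var Zv :: 'k qpoly) = Poly_Mapping.single (Abs_poly_mapping (\<lambda>v. if v = Zv then 1 else 0)) 1"
      proof -
        have "finite {v. (if v = Zv then 1 else 0::nat) \<noteq> 0}" by simp
        hence "(mono (\<lambda>v. if v = Zv then 1 else 0) :: 'k qpoly) = Poly_Mapping.single (Abs_poly_mapping (\<lambda>v. if v = Zv then 1 else 0)) 1"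
          by (rule mono_eq)
        moreover have "{v. (if v = Zv then 1 else 0::nat) \<noteq> 0} = {Zv}" by auto
        ultimately show ?thesis by (simp add: mono_def)
      qed
      thus ?thesis using \<open>b = CH W\<close> CG e by (auto simp: single_uminus)
    next
      case (CH W')
      have e: "(\<lambda>v. dg (CH W) v - dg (CH W') v) = (\<lambda>v. mexp gJ W v - mexp gJ W' v)" by auto
      show ?thesis using \<open>b = CH W\<close> CH e taylor_fact[OF fW gJ_le fin_supp_G[OF fW], of W', where 'k='k]
        by (simp add: single_uminus)
    qed
  qed
  show ?thesis unfolding key Abs_minus[OF fb fb'] ..
qed


lemma tsign_nz: "tsign U U' \<noteq> (0::'k::comm_ring_1) \<Longrightarrow> \<exists>u\<in>U. U' = U - {u}"
proof (rule ccontr)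
  assume a: "tsign U U' \<noteq> (0::'k)" "\<not> (\<exists>u\<in>U. U' = U - {u})"
  hence "\<forall>u\<in>U. (if U' = U - {u} then sg U u else (0::'k)) = 0" by auto
  hence "tsign U U' = (0::'k)" unfolding tsign_def by simp
  thus False using a by simp
qed

lemma mexp_mono:
  assumes "finite U" "U' \<subseteq> U" "\<And>u v. g u v \<le> 1"
  shows "mexp g U' v \<le> mexp g U v"
proof -
  have fU': "finite U'" using assms(1,2) by (rule finite_subset[rotated])
  show ?thesis unfolding mexp_01[OF fU' assms(3)] mexp_01[OF assms(1) assms(3)] using assms(2) by auto
qed

lemma sig_le:
  assumes i: "1 \<le> i" and b: "b \<in> cbasis n a i" and b': "b' \<in> cbasis n a (i - 1)"
    and nz: "sig b b' \<noteq> (0::'k::comm_ring_1)"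
  shows "dg b' v \<le> dg b v"
proof -
  have fb: "fcb b" using b cbasis_fcb by blast
  show ?thesis
  proof (cases b)
    case (CF V)
    hence fV: "finite V" using fb by simp
    show ?thesis
    proof (cases b')
      case (CF V')
      have "tsign V V' \<noteq> (0::'k)" using nz CF \<open>b = CF V\<close> by simp
      then obtain u where "V' = V - {u}" using tsign_nz[of V V'] by blast
      thus ?thesis using CF \<open>b = CF V\<close> mexp_mono[OF fV _ gI_le] by auto
    qed (use nz CF in auto)
  next
    case (CG W)
    hence fW: "finite W" using fb by simp
    show ?thesis
    proof (cases b')
      case (CG W')
      have "tsign W W' \<noteq> (0::'k)" using nz CG \<open>b = CG W\<close> by simp
      then obtain u where "W' = W - {u}" using tsign_nz[of W W'] by blast
      thus ?thesis using CG \<open>b = CG W\<close> mexp_mono[OF fW _ gJ_le] by auto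
    next
      case (CF V')
      hence "V' = {}" using nz \<open>b = CG W\<close> by (auto split: if_splits)
      thus ?thesis using CF by simp
    qed (use nz CG in auto)
  next
    case (CH W)
    hence fW: "finite W" using fb by simp
    show ?thesis
    proof (cases b')
      case (CH W')
      have "tsign W W' \<noteq> (0::'k)" using nz CH \<open>b = CH W\<close> by simp
      then obtain u where "W' = W - {u}" using tsign_nz[of W W'] by blast
      moreover have "mexp gJ (W - {u}) v \<le> mexp gJ W v" by (rule mexp_mono[OF fW _ gJ_le]) auto
      ultimately show ?thesis using CH \<open>b = CH W\<close> by simp
    next
      case (CG W')
      hence "W' = W" using nz \<open>b = CH W\<close> by (auto split: if_splits)
      thus ?thesis using CG \<open>b = CH W\<close> by simp
    next
      case (CF V')
      hence "V' = fst ` W" using nz \<open>b = CH W\<close> by (auto split: if_splits)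
      thus ?thesis using CF \<open>b = CH W\<close> fW by (cases v) (auto simp: eF eG)
    qed
  qed
qed


lemma sig_strict:
  assumes i: "1 \<le> i" and b: "b \<in> cbasis n a i" and b': "b' \<in> cbasis n a (i - 1)"
    and nz: "sig b b' \<noteq> (0::'k::comm_ring_1)"
  shows "\<exists>v. dg b' v < dg b v"
proof -
  have fb: "fcb b" using b cbasis_fcb by blast
  show ?thesis
  proof (cases b)
    case (CF V)
    hence fV: "finite V" using fb by simp
    show ?thesis
    proof (cases b')
      case (CF V')
      have "tsign V V' \<noteq> (0::'k)" using nz CF \<open>b = CF V\<close> by simp
      then obtain u where u: "u \<in> V" "V' = V - {u}" using tsign_nz[of V V'] by blast
      have "dg b' (Xv u) < dg b (Xv u)" using u CF \<open>b = CF V\<close> fV by (simp add: eF)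
      thus ?thesis by blast
    qed (use nz CF in auto)
  next
    case (CG W)
    hence fW: "finite W" using fb by simp
    show ?thesis
    proof (cases b')
      case (CG W')
      have "tsign W W' \<noteq> (0::'k)" using nz CG \<open>b = CG W\<close> by simp
      then obtain u where u: "u \<in> W" "W' = W - {u}" using tsign_nz[of W W'] by blast
      have "dg b' (Yv (fst u) (snd u)) < dg b (Yv (fst u) (snd u))" using u CG \<open>b = CG W\<close> fW
        by (auto simp: eG)
      thus ?thesis by blast
    next
      case (CF V')
      hence "V' = {}" "card W = 1" using nz \<open>b = CG W\<close> by (auto split: if_splits)
      then obtain w where "W = {w}" by (metis card_1_singletonE)
      hence "dg b' (Xv (fst w)) < dg b (Xv (fst w))" using CF \<open>V' = {}\<close> \<open>b = CG W\<close> by (simp add: eG)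
      thus ?thesis by blast
    qed (use nz CG in auto)
  next
    case (CH W)
    hence fW: "finite W" using fb by simp
    have Wne: "W \<noteq> {}" using b CH CH_in[of W n a i] by auto
    then obtain w where w: "w \<in> W" by auto
    show ?thesis
    proof (cases b')
      case (CH W')
      have "tsign W W' \<noteq> (0::'k)" using nz CH \<open>b = CH W\<close> by simp
      then obtain u where u: "u \<in> W" "W' = W - {u}" using tsign_nz[of W W'] by blast
      have "dg b' (Yv (fst u) (snd u)) < dg b (Yv (fst u) (snd u))" using u CH \<open>b = CH W\<close> fW
        by (auto simp: eG)
      thus ?thesis by blast
    next
      case (CG W')
      hence "W' = W" using nz \<open>b = CH W\<close> by (auto split: if_splits)
      hence "dg b' Zv < dg b Zv" using CG \<open>b = CH W\<close> by simp
      thus ?thesis by blast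
    next
      case (CF V')
      hence "V' = fst ` W" using nz \<open>b = CH W\<close> by (auto split: if_splits)
      hence "dg b' (Yv (fst w) (snd w)) < dg b (Yv (fst w) (snd w))" using CF \<open>b = CH W\<close> fW w
        by (auto simp: eF eG)
      thus ?thesis by blast
    qed
  qed
qed


lemma minimal:
  assumes i: "1 \<le> i" and b: "b \<in> cbasis n a i" and b': "b' \<in> cbasis n a (i - 1)"
  shows "Poly_Mapping.lookup (cdiff b b' :: 'k::field qpoly) 0 = 0"
proof (cases "sig b b' = (0::'k)")
  case True thus ?thesis using cdiff_fact[OF i b b', where 'k='k] by simp
next
  case False
  obtain v where v: "dg b' v < dg b v" using sig_strict[OF i b b' False] by blast
  have fb: "fcb b" "fcb b'" using b b' cbasis_fcb by auto
  have "Poly_Mapping.lookup (dm b - dm b') v \<noteq> 0" using v fb by (simp add: lookup_minus lookup_dm)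
  hence "dm b - dm b' \<noteq> 0" by auto
  thus ?thesis using cdiff_fact[OF i b b', where 'k='k] by (simp add: lookup_single)
qed


definition co :: "(var \<Rightarrow>\<^sub>0 nat) \<Rightarrow> (cb \<Rightarrow> 'k::field qpoly) \<Rightarrow> cb \<Rightarrow> 'k" where
  "co T x b = (if (\<forall>v. dg b v \<le> Poly_Mapping.lookup T v) then Poly_Mapping.lookup (x b) (T - dm b) else 0)"

definition sd :: "nat \<Rightarrow> (nat \<Rightarrow> nat) \<Rightarrow> nat \<Rightarrow> (cb \<Rightarrow> 'k::comm_ring_1) \<Rightarrow> cb \<Rightarrow> 'k" where
  "sd n a i \<xi> b' = (if b' \<in> cbasis n a (i - 1) then (\<Sum>b\<in>cbasis n a i. sig b b' * \<xi> b) else 0)"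

lemma co_term:
  fixes x :: "cb \<Rightarrow> 'k::field qpoly"
  assumes i: "1 \<le> i" and b: "b \<in> cbasis n a i" and b': "b' \<in> cbasis n a (i - 1)"
    and T: "\<forall>v. dg b' v \<le> Poly_Mapping.lookup T v"
  shows "Poly_Mapping.lookup (x b * Poly_Mapping.single (dm b - dm b') (sig b b')) (T - dm b') = sig b b' * co T x b"
proof (cases "sig b b' = (0::'k)")
  case True thus ?thesis by simp
next
  case False
  have le: "\<And>v. dg b' v \<le> dg b v" using sig_le[OF i b b' False] .
  have fb: "fcb b" "fcb b'" using b b' cbasis_fcb by auto
  have c: "(\<forall>v. Poly_Mapping.lookup (dm b - dm b') v \<le> Poly_Mapping.lookup (T - dm b') v) \<longleftrightarrow> (\<forall>v. dg b v \<le> Poly_Mapping.lookup T v)"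
  proof -
    have pv: "\<And>v. (dg b v - dg b' v \<le> Poly_Mapping.lookup T v - dg b' v) \<longleftrightarrow> dg b v \<le> Poly_Mapping.lookup T v"
    proof -
      fix v show "(dg b v - dg b' v \<le> Poly_Mapping.lookup T v - dg b' v) \<longleftrightarrow> dg b v \<le> Poly_Mapping.lookup T v"
        using le[of v] spec[OF T, of v] by linarith
    qed
    show ?thesis using fb by (simp add: lookup_minus lookup_dm pv)
  qed
  have e: "(\<forall>v. dg b v \<le> Poly_Mapping.lookup T v) \<Longrightarrow> T - dm b' - (dm b - dm b') = T - dm b"
    using le T fb by (intro poly_mapping_eqI) (simp add: lookup_minus lookup_dm)
  show ?thesis unfolding lookup_mult_single c co_def using e by (auto simp: mult.commute)
qed

lemma co_dC:
  fixes x :: "cb \<Rightarrow> 'k::field qpoly"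
  assumes i: "1 \<le> i"
  shows "co T (dC n a i x) b' = sd n a i (co T x) b'"
proof (cases "b' \<in> cbasis n a (i - 1)")
  case False thus ?thesis by (simp add: dC_def sd_def co_def)
next
  case True
  have dCe: "dC n a i x b' = (\<Sum>b\<in>cbasis n a i. x b * Poly_Mapping.single (dm b - dm b') (sig b b'))"
    unfolding dC_def using True by (simp add: cdiff_fact[OF i _ True, where 'k='k])
  show ?thesis
  proof (cases "\<forall>v. dg b' v \<le> Poly_Mapping.lookup T v")
    case T: True
    have "co T (dC n a i x) b' = (\<Sum>b\<in>cbasis n a i. Poly_Mapping.lookup (x b * Poly_Mapping.single (dm b - dm b') (sig b b')) (T - dm b'))"
      using T by (simp add: co_def dCe lookup_sum)
    also have "\<dots> = (\<Sum>b\<in>cbasis n a i. sig b b' * co T x b)"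
      by (intro sum.cong refl co_term[OF i _ True T])
    finally show ?thesis using True by (simp add: sd_def)
  next
    case F: False
    have "\<And>b. b \<in> cbasis n a i \<Longrightarrow> sig b b' * co T x b = 0"
    proof -
      fix b assume b: "b \<in> cbasis n a i"
      show "sig b b' * co T x b = 0"
      proof (cases "sig b b' = (0::'k)")
        case False
        have le: "\<And>v. dg b' v \<le> dg b v" using sig_le[OF i b True False] .
        hence "\<not> (\<forall>v. dg b v \<le> Poly_Mapping.lookup T v)" using F by (meson order_trans)
        thus ?thesis by (auto simp: co_def)
      qed simp
    qed
    hence "sd n a i (co T x) b' = 0" using True unfolding sd_def by (simp add: sum.neutral)
    moreover have "co T (dC n a i x) b' = 0" using F by (auto simp: co_def)
    ultimately show ?thesis by simp
  qed
qed

lemma co_lookup: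
  assumes "fcb b"
  shows "Poly_Mapping.lookup (f b) s = co (s + dm b) f b"
proof -
  have "\<forall>v. dg b v \<le> Poly_Mapping.lookup (s + dm b) v" using assms by (simp add: lookup_add lookup_dm)
  thus ?thesis by (simp add: co_def)
qed

lemma eq_by_co:
  assumes "fcb b" "\<And>T. co T f b = co T g b"
  shows "f b = g b"
proof (rule poly_mapping_eqI)
  fix s show "Poly_Mapping.lookup (f b) s = Poly_Mapping.lookup (g b) s"
    using co_lookup[OF assms(1), of f s] co_lookup[OF assms(1), of g s] assms(2) by simp
qed

lemma co_zero [simp]: "co T (\<lambda>_. 0) b = 0"
  by (simp add: co_def)

theorem complex_dd:
  assumes i: "1 \<le> i"
  shows "dC n a i (dC n a (Suc i) x) = (\<lambda>_. (0::'k::field qpoly))"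
proof
  fix b''
  show "dC n a i (dC n a (Suc i) x) b'' = 0"
  proof (cases "b'' \<in> cbasis n a (i - 1)")
    case False thus ?thesis by (simp add: dC_def)
  next
    case True
    have fb: "fcb b''" using True cbasis_fcb by blast
    show ?thesis
    proof (rule eq_by_co[OF fb, of _ "\<lambda>_. 0", simplified])
      fix T
      have "co T (dC n a i (dC n a (Suc i) x)) b'' = sd n a i (co T (dC n a (Suc i) x)) b''"
        by (rule co_dC[OF i])
      also have "\<dots> = (\<Sum>b'\<in>cbasis n a i. sig b' b'' * (\<Sum>b\<in>cbasis n a (Suc i). sig b b' * co T x b))"
        using True by (simp add: sd_def co_dC)
      also have "\<dots> = (\<Sum>b'\<in>cbasis n a i. \<Sum>b\<in>cbasis n a (Suc i). co T x b * (sig b b' * sig b' b''))"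
        by (simp add: sum_distrib_left algebra_simps)
      also have "\<dots> = (\<Sum>b\<in>cbasis n a (Suc i). co T x b * (\<Sum>b'\<in>cbasis n a i. sig b b' * sig b' b''))"
        by (subst sum.swap) (simp add: sum_distrib_left)
      also have "\<dots> = 0"
        by (intro sum.neutral ballI) (simp add: sig_dd[OF i _ True])
      finally show "co T (dC n a i (dC n a (Suc i) x)) b'' = 0" .
    qed
  qed
qed


definition zT :: "(var \<Rightarrow>\<^sub>0 nat) \<Rightarrow> bool" where "zT T \<longleftrightarrow> 1 \<le> Poly_Mapping.lookup T Zv"
definition SI :: "nat \<Rightarrow> (var \<Rightarrow>\<^sub>0 nat) \<Rightarrow> nat set" where
  "SI n T = {i\<in>GI n. 1 \<le> Poly_Mapping.lookup T (Xv i)}"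
definition YJ :: "nat \<Rightarrow> (nat \<Rightarrow> nat) \<Rightarrow> (var \<Rightarrow>\<^sub>0 nat) \<Rightarrow> (nat \<times> nat) set" where
  "YJ n a T = {p\<in>GJ n a. 1 \<le> Poly_Mapping.lookup T (Xv (fst p)) \<and> 1 \<le> Poly_Mapping.lookup T (Yv (fst p) (snd p))}"
definition hm :: "nat \<Rightarrow> (nat \<Rightarrow> nat) \<Rightarrow> (var \<Rightarrow>\<^sub>0 nat) \<Rightarrow> cb \<Rightarrow> cb \<Rightarrow> 'k::comm_ring_1" where
  "hm n a T = (if zT T then hmA (Min (SI n T)) else hmB (Min (YJ n a T)))"
definition st :: "(var \<Rightarrow>\<^sub>0 nat) \<Rightarrow> cb \<Rightarrow> bool" where
  "st T b \<longleftrightarrow> (\<forall>v. dg b v \<le> Poly_Mapping.lookup T v)"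

lemma stF:
  assumes "finite V"
  shows "st T (CF V) \<longleftrightarrow> (V \<noteq> {} \<longrightarrow> zT T) \<and> (\<forall>i\<in>V. 1 \<le> Poly_Mapping.lookup T (Xv i))"
proof
  assume s: "st T (CF V)"
  have d: "\<And>v. dg (CF V) v \<le> Poly_Mapping.lookup T v" using s st_def by blast
  have z: "(if V \<noteq> {} then 1 else 0) \<le> Poly_Mapping.lookup T Zv" using d[of Zv] assms by (simp add: eF)
  have x: "1 \<le> Poly_Mapping.lookup T (Xv i)" if "i \<in> V" for i using d[of "Xv i"] assms that by (simp add: eF)
  show "(V \<noteq> {} \<longrightarrow> zT T) \<and> (\<forall>i\<in>V. 1 \<le> Poly_Mapping.lookup T (Xv i))"
    using z x by (auto simp: zT_def split: if_splits)
next
  assume r: "(V \<noteq> {} \<longrightarrow> zT T) \<and> (\<forall>i\<in>V. 1 \<le> Poly_Mapping.lookup T (Xv i))"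
  show "st T (CF V)" unfolding st_def
  proof
    fix v show "dg (CF V) v \<le> Poly_Mapping.lookup T v"
      using r assms by (cases v) (auto simp: eF zT_def)
  qed
qed

lemma stG:
  assumes "finite W"
  shows "st T (CG W) \<longleftrightarrow> (\<forall>p\<in>W. 1 \<le> Poly_Mapping.lookup T (Xv (fst p)) \<and> 1 \<le> Poly_Mapping.lookup T (Yv (fst p) (snd p)))"
proof
  assume s: "st T (CG W)"
  have d: "\<And>v. dg (CG W) v \<le> Poly_Mapping.lookup T v" using s st_def by blast
  have x: "dg (CG W) (Xv (fst p)) = 1" "dg (CG W) (Yv (fst p) (snd p)) = 1" if "p \<in> W" for p
    using that assms by (auto simp: eG)
  show "\<forall>p\<in>W. 1 \<le> Poly_Mapping.lookup T (Xv (fst p)) \<and> 1 \<le> Poly_Mapping.lookup T (Yv (fst p) (snd p))"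
    using x d by metis
next
  assume r: "\<forall>p\<in>W. 1 \<le> Poly_Mapping.lookup T (Xv (fst p)) \<and> 1 \<le> Poly_Mapping.lookup T (Yv (fst p) (snd p))"
  show "st T (CG W)" unfolding st_def
  proof
    fix v show "dg (CG W) v \<le> Poly_Mapping.lookup T v"
      using r assms by (cases v) (auto simp: eG)
  qed
qed

lemma stH:
  assumes "finite W"
  shows "st T (CH W) \<longleftrightarrow> zT T \<and> st T (CG W)"
proof
  assume s: "st T (CH W)"
  have d: "\<And>v. dg (CH W) v \<le> Poly_Mapping.lookup T v" using s st_def by blast
  have "zT T" using d[of Zv] by (simp add: zT_def)
  moreover have "st T (CG W)" unfolding st_def using d by (metis dg.simps(2,3) le_add1 order_trans)
  ultimately show "zT T \<and> st T (CG W)" by simp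
next
  assume r: "zT T \<and> st T (CG W)"
  show "st T (CH W)" unfolding st_def
  proof
    fix v
    have "dg (CG W) v \<le> Poly_Mapping.lookup T v" using r st_def by blast
    moreover have "mexp gJ W Zv = 0" using assms by (simp add: eG)
    ultimately show "dg (CH W) v \<le> Poly_Mapping.lookup T v"
      using r by (cases "v = Zv") (auto simp: zT_def)
  qed
qed

lemma b0_info:
  assumes i: "1 \<le> i" and b0: "b0 \<in> cbasis n a i" and s: "st T b0"
  shows "zT T \<Longrightarrow> SI n T \<noteq> {}"
    and "\<not> zT T \<Longrightarrow> \<exists>W. b0 = CG W \<and> W \<subseteq> YJ n a T \<and> W \<noteq> {}"
proof -
  have fb: "fcb b0" using b0 cbasis_fcb by blast
  have ne: "\<exists>p. p \<in> W" if "b0 = CG W \<or> b0 = CH W" for W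
  proof -
    have "card W \<noteq> 0" using that b0 i CG_in[of W n a i] CH_in[of W n a i] by auto
    thus ?thesis by (metis card.empty ex_in_conv)
  qed
  {
    assume z: "zT T"
    show "SI n T \<noteq> {}"
    proof (cases b0)
      case (CF V)
      have V: "V \<subseteq> GI n" "card V = i" using b0 CF CF_in[of V n a i] i by auto
      then obtain v where "v \<in> V" using i by (metis card.empty ex_in_conv not_one_le_zero)
      thus ?thesis using V s CF fb stF[of V T] by (auto simp: SI_def)
    next
      case (CG W)
      then obtain p where p: "p \<in> W" using ne by blast
      have "W \<subseteq> GJ n a" using b0 CG CG_in[of W n a i] by auto
      hence "fst p \<in> GI n" using p by (auto simp: GJ_def GI_def)
      thus ?thesis using p s CG fb stG[of W T] by (auto simp: SI_def)
    next
      case (CH W)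
      then obtain p where p: "p \<in> W" using ne by blast
      have "W \<subseteq> GJ n a" using b0 CH CH_in[of W n a i] by auto
      hence "fst p \<in> GI n" using p by (auto simp: GJ_def GI_def)
      thus ?thesis using p s CH fb stH[of W T] stG[of W T] by (auto simp: SI_def)
    qed
  }
  {
    assume z: "\<not> zT T"
    show "\<exists>W. b0 = CG W \<and> W \<subseteq> YJ n a T \<and> W \<noteq> {}"
    proof (cases b0)
      case (CF V)
      have V: "card V = i" using b0 CF CF_in[of V n a i] i by auto
      hence "V \<noteq> {}" using i by auto
      thus ?thesis using s CF fb stF[of V T] z by auto
    next
      case (CG W)
      have "W \<subseteq> GJ n a" using b0 CG CG_in[of W n a i] by auto
      moreover have "W \<noteq> {}" using ne CG by blast
      ultimately show ?thesis using s CG fb stG[of W T] by (auto simp: YJ_def)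
    next
      case (CH W)
      thus ?thesis using s fb stH[of W T] z by auto
    qed
  }
qed

lemma hm_st:
  assumes i: "1 \<le> i" and b0: "b0 \<in> cbasis n a i" and s: "st T b0"
    and nz: "hm n a T b0 b \<noteq> (0::'k::comm_ring_1)"
  shows "st T b"
proof -
  have fb: "fcb b0" using b0 cbasis_fcb by blast
  show ?thesis
  proof (cases "zT T")
    case True
    define i0 where "i0 = Min (SI n T)"
    have fS: "finite (SI n T)" by (simp add: SI_def)
    have i0S: "i0 \<in> SI n T" using b0_info(1)[OF i b0 s True] fS i0_def Min_in by blast
    have nz': "hmA i0 b0 b \<noteq> (0::'k)" using nz True by (simp add: hm_def i0_def)
    show ?thesis
    proof (cases b0)
      case (CF V)
      then obtain V' where "b = CF V'" "V' = insert i0 V" using nz' by (cases b) (auto split: if_splits)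
      thus ?thesis using s CF fb stF i0S True by (auto simp: SI_def)
    next
      case (CG W)
      have fW: "finite W" using fb CG by simp
      have sW: "\<forall>p\<in>W. 1 \<le> Poly_Mapping.lookup T (Xv (fst p)) \<and> 1 \<le> Poly_Mapping.lookup T (Yv (fst p) (snd p))"
        using s CG stG[OF fW] by simp
      show ?thesis
      proof (cases b)
        case (CF V')
        hence "V' = insert i0 (fst ` W)" using nz' CG by (auto split: if_splits)
        thus ?thesis using CF sW fW stF i0S True by (auto simp: SI_def)
      next
        case (CH W')
        hence "W' = W" using nz' CG by (auto split: if_splits)
        thus ?thesis using CH s CG stH[OF fW] True by simp
      next
        case (CG W')
        thus ?thesis using nz' \<open>b0 = CG W\<close> by simp
      qed
    next
      case (CH W)
      thus ?thesis using nz' by simp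
    qed
  next
    case False
    obtain W where W: "b0 = CG W" "W \<subseteq> YJ n a T" "W \<noteq> {}" using b0_info(2)[OF i b0 s False] by blast
    define w0 where "w0 = Min (YJ n a T)"
    have fY: "finite (YJ n a T)" by (simp add: YJ_def)
    have w0Y: "w0 \<in> YJ n a T" using W fY w0_def Min_in by blast
    have fW: "finite W" using fb W by simp
    have nz': "hmB w0 b0 b \<noteq> (0::'k)" using nz False by (simp add: hm_def w0_def)
    then obtain W' where "b = CG W'" "W' = insert w0 W" using W by (cases b) (auto split: if_splits)
    thus ?thesis using s W fW stG w0Y by (auto simp: YJ_def)
  qed
qed

lemma hm_E:
  assumes i: "1 \<le> i" and b0: "b0 \<in> cbasis n a i" and s: "st T b0" and b2: "b2 \<in> cbasis n a i"
  shows "(\<Sum>b1\<in>cbasis n a (Suc i). hm n a T b0 b1 * sig b1 b2)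
       + (\<Sum>b1\<in>cbasis n a (i - 1). sig b0 b1 * hm n a T b1 b2)
       = (if b0 = b2 then 1 else (0::'k::comm_ring_1))"
proof -
  have fb: "fcb b0" using b0 cbasis_fcb by blast
  show ?thesis
  proof (cases "zT T")
    case True
    define i0 where "i0 = Min (SI n T)"
    have fS: "finite (SI n T)" by (simp add: SI_def)
    have i0S: "i0 \<in> SI n T" using b0_info(1)[OF i b0 s True] fS i0_def Min_in by blast
    hence i0G: "i0 \<in> GI n" by (simp add: SI_def)
    have okF: "\<And>V v. b0 = CF V \<Longrightarrow> v \<in> V \<Longrightarrow> i0 \<le> v"
    proof -
      fix V v assume V: "b0 = CF V" "v \<in> V"
      have "V \<subseteq> GI n" using b0 V i CF_in[of V n a i] by auto
      hence "v \<in> SI n T" using V s fb stF[of V T] by (auto simp: SI_def)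
      thus "i0 \<le> v" using fS i0_def by simp
    qed
    have okG: "\<And>W p. b0 = CG W \<Longrightarrow> p \<in> W \<Longrightarrow> i0 \<le> fst p"
    proof -
      fix W p assume W: "b0 = CG W" "p \<in> W"
      have "W \<subseteq> GJ n a" using b0 W CG_in[of W n a i] by auto
      hence "fst p \<in> GI n" using W by (auto simp: GJ_def GI_def)
      hence "fst p \<in> SI n T" using W s fb stG[of W T] by (auto simp: SI_def)
      thus "i0 \<le> fst p" using fS i0_def by simp
    qed
    have "(hm n a T :: cb \<Rightarrow> cb \<Rightarrow> 'k) = hmA i0" using True by (simp add: hm_def i0_def)
    moreover have "(\<Sum>b1\<in>cbasis n a (Suc i). hmA i0 b0 b1 * sig b1 b2)
       + (\<Sum>b1\<in>cbasis n a (i - 1). sig b0 b1 * hmA i0 b1 b2)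
       = (if b0 = b2 then 1 else (0::'k))"
      by (rule homA[OF i b0 b2 i0G]) (fact okF, fact okG)
    ultimately show ?thesis by simp
  next
    case False
    obtain W where W: "b0 = CG W" "W \<subseteq> YJ n a T" "W \<noteq> {}" using b0_info(2)[OF i b0 s False] by blast
    define w0 where "w0 = Min (YJ n a T)"
    have fY: "finite (YJ n a T)" by (simp add: YJ_def)
    have w0Y: "w0 \<in> YJ n a T" using W fY w0_def Min_in by blast
    hence w0G: "w0 \<in> GJ n a" by (simp add: YJ_def)
    have ok: "\<And>w. w \<in> W \<Longrightarrow> w0 \<le> w" using W fY w0_def by auto
    have "(hm n a T :: cb \<Rightarrow> cb \<Rightarrow> 'k) = hmB w0" using False by (simp add: hm_def w0_def)
    moreover have "(\<Sum>b1\<in>cbasis n a (Suc i). hmB w0 (CG W) b1 * sig b1 b2)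
       + (\<Sum>b1\<in>cbasis n a (i - 1). sig (CG W) b1 * hmB w0 b1 b2)
       = (if CG W = b2 then 1 else (0::'k))"
      by (rule homB[OF i _ b2 w0G]) (use b0 W ok in auto)
    ultimately show ?thesis using W by simp
  qed
qed


definition hh :: "nat \<Rightarrow> (nat \<Rightarrow> nat) \<Rightarrow> (var \<Rightarrow>\<^sub>0 nat) \<Rightarrow> nat \<Rightarrow> (cb \<Rightarrow> 'k::comm_ring_1) \<Rightarrow> cb \<Rightarrow> 'k" where
  "hh n a T j \<xi> b = (if b \<in> cbasis n a (Suc j) then (\<Sum>b0\<in>cbasis n a j. \<xi> b0 * hm n a T b0 b) else 0)"

lemma homotopy:
  fixes \<xi> :: "cb \<Rightarrow> 'k::comm_ring_1"
  assumes i: "1 \<le> i" and supp: "\<And>b. \<xi> b \<noteq> 0 \<Longrightarrow> b \<in> cbasis n a i \<and> st T b"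
  shows "sd n a (Suc i) (hh n a T i \<xi>) b2 + hh n a T (i - 1) (sd n a i \<xi>) b2 = \<xi> b2"
proof (cases "b2 \<in> cbasis n a i")
  case False
  have "\<xi> b2 = 0" using supp False by blast
  moreover have "Suc (i - 1) = i" using i by simp
  ultimately show ?thesis using False by (simp add: sd_def hh_def)
next
  case True
  have s1: "sd n a (Suc i) (hh n a T i \<xi>) b2 = (\<Sum>b1\<in>cbasis n a (Suc i). sig b1 b2 * (\<Sum>b0\<in>cbasis n a i. \<xi> b0 * hm n a T b0 b1))"
    using True by (simp add: sd_def hh_def)
  also have "\<dots> = (\<Sum>b0\<in>cbasis n a i. \<xi> b0 * (\<Sum>b1\<in>cbasis n a (Suc i). hm n a T b0 b1 * sig b1 b2))"
    by (simp add: sum_distrib_left sum_distrib_right algebra_simps sum.swap[of _ "cbasis n a (Suc i)"])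
  finally have s1': "sd n a (Suc i) (hh n a T i \<xi>) b2 = (\<Sum>b0\<in>cbasis n a i. \<xi> b0 * (\<Sum>b1\<in>cbasis n a (Suc i). hm n a T b0 b1 * sig b1 b2))" .
  have "Suc (i - 1) = i" using i by simp
  hence "hh n a T (i - 1) (sd n a i \<xi>) b2 = (\<Sum>b1\<in>cbasis n a (i-1). (\<Sum>b0\<in>cbasis n a i. sig b0 b1 * \<xi> b0) * hm n a T b1 b2)"
    using True by (simp add: sd_def hh_def)
  also have "\<dots> = (\<Sum>b0\<in>cbasis n a i. \<xi> b0 * (\<Sum>b1\<in>cbasis n a (i-1). sig b0 b1 * hm n a T b1 b2))"
    by (simp add: sum_distrib_left sum_distrib_right algebra_simps) (rule sum.swap)
  finally have s2: "hh n a T (i - 1) (sd n a i \<xi>) b2 = (\<Sum>b0\<in>cbasis n a i. \<xi> b0 * (\<Sum>b1\<in>cbasis n a (i-1). sig b0 b1 * hm n a T b1 b2))" .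
  have "sd n a (Suc i) (hh n a T i \<xi>) b2 + hh n a T (i - 1) (sd n a i \<xi>) b2
     = (\<Sum>b0\<in>cbasis n a i. \<xi> b0 * ((\<Sum>b1\<in>cbasis n a (Suc i). hm n a T b0 b1 * sig b1 b2) + (\<Sum>b1\<in>cbasis n a (i-1). sig b0 b1 * hm n a T b1 b2)))"
    unfolding s1' s2 by (simp add: sum.distrib[symmetric] algebra_simps)
  also have "\<dots> = (\<Sum>b0\<in>cbasis n a i. if b0 = b2 then \<xi> b0 else 0)"
  proof (intro sum.cong refl)
    fix b0 assume b0: "b0 \<in> cbasis n a i"
    show "\<xi> b0 * ((\<Sum>b1\<in>cbasis n a (Suc i). hm n a T b0 b1 * sig b1 b2) + (\<Sum>b1\<in>cbasis n a (i-1). sig b0 b1 * hm n a T b1 b2))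
        = (if b0 = b2 then \<xi> b0 else 0)"
    proof (cases "\<xi> b0 = 0")
      case False
      hence "st T b0" using supp by blast
      thus ?thesis using hm_E[OF i b0 _ True, where 'k='k] by simp
    qed auto
  qed
  also have "\<dots> = \<xi> b2" using True by (simp add: sum.delta')
  finally show ?thesis .
qed

lemma sum_nz: "(\<Sum>x\<in>A. f x) \<noteq> 0 \<Longrightarrow> \<exists>x\<in>A. f x \<noteq> 0"
  by (metis sum.neutral)

theorem exact:
  fixes x :: "cb \<Rightarrow> 'k::field qpoly"
  assumes i: "1 \<le> i" and xin: "in_C n a i x" and dx: "dC n a i x = (\<lambda>_. 0)"
  shows "\<exists>y. in_C n a (Suc i) y \<and> dC n a (Suc i) y = x"
proof -
  define \<eta> where "\<eta> T = hh n a T i (co T x)" for T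
  have supp: "\<And>T b. co T x b \<noteq> 0 \<Longrightarrow> b \<in> cbasis n a i \<and> st T b"
  proof -
    fix T b assume c: "co T x b \<noteq> 0"
    have "x b \<noteq> 0"
    proof
      assume h: "x b = 0"
      have "co T x b = 0" unfolding co_def using h by simp
      thus False using c by simp
    qed
    hence "b \<in> cbasis n a i" using xin by (auto simp: in_C_def)
    moreover have "st T b" using c by (auto simp: co_def st_def split: if_splits)
    ultimately show "b \<in> cbasis n a i \<and> st T b" by simp
  qed
  have sdx: "\<And>T b. sd n a i (co T x) b = 0"
  proof -
    fix T b
    have "sd n a i (co T x) b = co T (dC n a i x) b" using co_dC[OF i, where 'k='k] by simp
    also have "\<dots> = 0" using dx by simp
    finally show "sd n a i (co T x) b = 0" .
  qed
  have hom: "\<And>T b2. sd n a (Suc i) (\<eta> T) b2 = co T x b2"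
  proof -
    fix T b2
    have "\<And>c. hh n a T (i - 1) (sd n a i (co T x)) c = 0" using sdx by (simp add: hh_def)
    thus "sd n a (Suc i) (\<eta> T) b2 = co T x b2"
      using homotopy[where \<xi>="co T x" and T=T and n=n and a=a, OF i supp] unfolding \<eta>_def by simp
  qed
  have \<eta>supp: "\<And>T b. \<eta> T b \<noteq> 0 \<Longrightarrow> b \<in> cbasis n a (Suc i) \<and> st T b"
  proof -
    fix T b assume nz: "\<eta> T b \<noteq> 0"
    hence inb: "b \<in> cbasis n a (Suc i)" by (auto simp: \<eta>_def hh_def split: if_splits)
    hence "(\<Sum>b0\<in>cbasis n a i. co T x b0 * hm n a T b0 b) \<noteq> 0" using nz by (simp add: \<eta>_def hh_def)
    then obtain b0 where b0: "b0 \<in> cbasis n a i" "co T x b0 * hm n a T b0 b \<noteq> 0" using sum_nz by blast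
    hence "st T b0" "hm n a T b0 b \<noteq> (0::'k)" using supp by auto
    hence "st T b" using hm_st[OF i b0(1)] by blast
    thus "b \<in> cbasis n a (Suc i) \<and> st T b" using inb by simp
  qed
  define Tset where "Tset = (\<Union>b0\<in>cbasis n a i. (\<lambda>k. k + dm b0) ` Poly_Mapping.keys (x b0))"
  have finT: "finite Tset" unfolding Tset_def by simp
  have \<eta>T: "\<And>T b. \<eta> T b \<noteq> 0 \<Longrightarrow> T \<in> Tset"
  proof -
    fix T b assume nz: "\<eta> T b \<noteq> 0"
    hence "(\<Sum>b0\<in>cbasis n a i. co T x b0 * hm n a T b0 b) \<noteq> 0" by (auto simp: \<eta>_def hh_def split: if_splits)
    then obtain b0 where b0: "b0 \<in> cbasis n a i" "co T x b0 \<noteq> 0" using sum_nz by force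
    have fb: "fcb b0" using b0 cbasis_fcb by blast
    have le: "\<forall>v. dg b0 v \<le> Poly_Mapping.lookup T v" and k: "Poly_Mapping.lookup (x b0) (T - dm b0) \<noteq> 0"
      using b0(2) by (auto simp: co_def split: if_splits)
    have "T = (T - dm b0) + dm b0" using le fb by (intro poly_mapping_eqI) (simp add: lookup_add lookup_minus lookup_dm)
    moreover have "T - dm b0 \<in> Poly_Mapping.keys (x b0)" using k by (simp add: in_keys_iff)
    ultimately show "T \<in> Tset" unfolding Tset_def using b0(1) by blast
  qed
  define y where "y b = Abs_poly_mapping (\<lambda>s. \<eta> (s + dm b) b)" for b
  have fin_y: "\<And>b. finite {s. \<eta> (s + dm b) b \<noteq> 0}"
  proof -
    fix b
    have "{s. \<eta> (s + dm b) b \<noteq> 0} \<subseteq> (\<lambda>s. s + dm b) -` Tset" using \<eta>T by auto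
    moreover have "finite ((\<lambda>s. s + dm b) -` Tset)"
      by (rule finite_vimageI[OF finT]) (simp add: inj_def)
    ultimately show "finite {s. \<eta> (s + dm b) b \<noteq> 0}" using finite_subset by blast
  qed
  have lookup_y: "\<And>b s. Poly_Mapping.lookup (y b) s = \<eta> (s + dm b) b"
    unfolding y_def using fin_y by simp
  have coy: "\<And>T b. co T y b = \<eta> T b"
  proof -
    fix T b
    show "co T y b = \<eta> T b"
    proof (cases "st T b")
      case True
      show ?thesis
      proof (cases "fcb b")
        case True
        have "T - dm b + dm b = T" using \<open>st T b\<close> True
          by (intro poly_mapping_eqI) (simp add: lookup_add lookup_minus lookup_dm st_def)
        thus ?thesis using \<open>st T b\<close> by (simp add: co_def st_def lookup_y)
      next
        case False
        hence "\<And>T'. \<eta> T' b = 0" using \<eta>supp cbasis_fcb by blast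
        thus ?thesis by (simp add: co_def lookup_y)
      qed
    next
      case False
      thus ?thesis using \<eta>supp by (auto simp: co_def st_def)
    qed
  qed
  have coy': "\<And>T. co T y = \<eta> T" using coy by blast
  have dy: "dC n a (Suc i) y = x"
  proof
    fix b show "dC n a (Suc i) y b = x b"
    proof (cases "b \<in> cbasis n a i")
      case True
      have fb: "fcb b" using True cbasis_fcb by blast
      show ?thesis
      proof (rule eq_by_co[OF fb])
        fix T
        have "co T (dC n a (Suc i) y) b = sd n a (Suc i) (co T y) b" by (rule co_dC) simp
        also have "\<dots> = co T x b" unfolding coy' by (rule hom)
        finally show "co T (dC n a (Suc i) y) b = co T x b" .
      qed
    next
      case False
      thus ?thesis using xin by (simp add: dC_def in_C_def)
    qed
  qed
  have yin: "in_C n a (Suc i) y"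
    unfolding in_C_def
  proof (intro allI impI)
    fix b assume "b \<notin> cbasis n a (Suc i)"
    hence "\<And>s. \<eta> (s + dm b) b = 0" using \<eta>supp by blast
    thus "y b = 0" unfolding y_def by simp
  qed
  show ?thesis using yin dy by blast
qed


lemma mexp_single: "mexp g {u} = g u"
  by (rule ext) (simp add: mexp_def)

lemma taylor_single_empty: "(taylor_entry g {u} {} :: 'k::field qpoly) = mono (g u)"
proof -
  have "{v. v = u \<and> v < u} = {}" by auto
  hence c0: "card {v. v = u \<and> v < u} = 0" by (metis card.empty)
  show ?thesis by (simp add: taylor_entry_def mexp_single c0)
qed

lemma d1_formula:
  fixes x :: "cb \<Rightarrow> 'k::field qpoly"
  shows "dC n a 1 x (CF {}) = (\<Sum>i\<in>GI n. x (CF {i}) * mono (gI i)) + (\<Sum>p\<in>GJ n a. x (CG {p}) * mono (gJ p))"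
proof -
  have "CF {} \<in> cbasis n a 0" by (simp add: cbasis_def)
  hence "dC n a 1 x (CF {}) = (\<Sum>b\<in>cbasis n a 1. x b * cdiff b (CF {}))" by (simp add: dC_def)
  also have "\<dots> = (\<Sum>V\<in>CF -` cbasis n a 1. x (CF V) * cdiff (CF V) (CF {}))
     + (\<Sum>W\<in>CG -` cbasis n a 1. x (CG W) * cdiff (CG W) (CF {}))
     + (\<Sum>W\<in>CH -` cbasis n a 1. x (CH W) * cdiff (CH W) (CF {}))"
    by (rule sum_cb) simp
  also have "CF -` cbasis n a 1 = (\<lambda>i. {i}) ` GI n" unfolding vCF by (auto simp: card_1_singleton_iff)
  also have "CG -` cbasis n a 1 = (\<lambda>p. {p}) ` GJ n a" unfolding vCG by (auto simp: card_1_singleton_iff)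
  also have "CH -` cbasis n a 1 = {}" unfolding vCH by simp
  finally show ?thesis by (simp add: sum.reindex taylor_single_empty)
qed

lemma single_key_inj: "Poly_Mapping.single k (1::'k::field) = Poly_Mapping.single k' 1 \<Longrightarrow> k = k'"
  by (metis lookup_single_eq lookup_single_not_eq one_neq_zero)

lemma mono_inj:
  assumes "finite {v. e v \<noteq> 0}" "finite {v. e' v \<noteq> 0}" "(mono e :: 'k::field qpoly) = mono e'"
  shows "e = e'"
proof -
  have "Abs_poly_mapping e = Abs_poly_mapping e'"
    using assms mono_eq[of e, where 'k='k] mono_eq[of e', where 'k='k] single_key_inj by metis
  hence "Poly_Mapping.lookup (Abs_poly_mapping e) = Poly_Mapping.lookup (Abs_poly_mapping e')" by simp
  thus ?thesis using lookup_Abs_poly_mapping[OF assms(1)] lookup_Abs_poly_mapping[OF assms(2)] by simp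
qed

lemma fin_gI: "finite {v. gI i v \<noteq> 0}"
  by (rule finite_subset[of _ "{Zv, Xv i}"]) (auto simp: gI_def)
lemma fin_gJ: "finite {v. gJ p v \<noteq> 0}"
  by (rule finite_subset[of _ "{Xv (fst p), Yv (fst p) (snd p)}"]) (auto simp: gJ_def)

lemma mI_inj: "(mono (gI i) :: 'k::field qpoly) = mono (gI j) \<Longrightarrow> i = j"
proof -
  assume "(mono (gI i) :: 'k qpoly) = mono (gI j)"
  hence "gI i = gI j" using mono_inj[OF fin_gI fin_gI] by blast
  hence "gI i (Xv i) = gI j (Xv i)" by simp
  thus "i = j" by (simp add: gI_def split: if_splits)
qed

lemma mJ_inj: "(mono (gJ p) :: 'k::field qpoly) = mono (gJ q) \<Longrightarrow> p = q"
proof -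
  assume "(mono (gJ p) :: 'k qpoly) = mono (gJ q)"
  hence "gJ p = gJ q" using mono_inj[OF fin_gJ fin_gJ] by blast
  hence "gJ p (Yv (fst p) (snd p)) = gJ q (Yv (fst p) (snd p))" by simp
  thus "p = q" by (cases p, cases q) (simp add: gJ_def split: if_splits)
qed

lemma mIJ_disj: "(mono (gI i) :: 'k::field qpoly) \<noteq> mono (gJ p)"
proof
  assume "(mono (gI i) :: 'k qpoly) = mono (gJ p)"
  hence "gI i = gJ p" using mono_inj[OF fin_gI fin_gJ] by blast
  hence "gI i Zv = gJ p Zv" by simp
  thus False by (simp add: gI_def gJ_def)
qed

lemma mIJ_injon_I: "inj_on (\<lambda>i. mono (gI i) :: 'k::field qpoly) A"
  by (rule inj_onI) (rule mI_inj)
lemma mIJ_injon_J: "inj_on (\<lambda>p. mono (gJ p) :: 'k::field qpoly) A"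
  by (rule inj_onI) (rule mJ_inj)

lemma ideal_sum:
  fixes c :: "'k::field qpoly \<Rightarrow> 'k qpoly"
  shows "(\<Sum>s\<in>I_Gamma_gens n a. c s * s)
     = (\<Sum>i\<in>GI n. c (mono (gI i)) * mono (gI i)) + (\<Sum>p\<in>GJ n a. c (mono (gJ p)) * mono (gJ p))"
proof -
  have d: "(\<lambda>i. mono (gI i) :: 'k qpoly) ` GI n \<inter> (\<lambda>p. mono (gJ p)) ` GJ n a = {}"
    using mIJ_disj by blast
  have "(\<Sum>s\<in>I_Gamma_gens n a. c s * s) = (\<Sum>s\<in>(\<lambda>i. mono (gI i) :: 'k qpoly) ` GI n. c s * s) + (\<Sum>s\<in>(\<lambda>p. mono (gJ p)) ` GJ n a. c s * s)"
    unfolding I_Gamma_gens_def by (rule sum.union_disjoint) (simp_all add: d)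
  also have "(\<Sum>s\<in>(\<lambda>i. mono (gI i) :: 'k qpoly) ` GI n. c s * s) = (\<Sum>i\<in>GI n. c (mono (gI i)) * mono (gI i))"
    by (simp add: sum.reindex[OF mIJ_injon_I])
  also have "(\<Sum>s\<in>(\<lambda>p. mono (gJ p) :: 'k qpoly) ` GJ n a. c s * s) = (\<Sum>p\<in>GJ n a. c (mono (gJ p)) * mono (gJ p))"
    by (simp add: sum.reindex[OF mIJ_injon_J])
  finally show ?thesis .
qed

theorem image_d1:
  "{dC n a 1 x (CF {}) | x::cb \<Rightarrow> 'k::field qpoly. True} = ideal_gen (I_Gamma_gens n a)"
proof
  show "{dC n a 1 x (CF {}) | x::cb \<Rightarrow> 'k qpoly. True} \<subseteq> ideal_gen (I_Gamma_gens n a)"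
  proof
    fix p :: "'k qpoly" assume "p \<in> {dC n a 1 x (CF {}) | x::cb \<Rightarrow> 'k qpoly. True}"
    then obtain x :: "cb \<Rightarrow> 'k qpoly" where p: "p = dC n a 1 x (CF {})" by blast
    define mI where "mI i = (mono (gI i) :: 'k qpoly)" for i
    define mJ where "mJ q = (mono (gJ q) :: 'k qpoly)" for q
    define c where "c s = (if s \<in> mI ` GI n then x (CF {inv_into (GI n) mI s}) else x (CG {inv_into (GJ n a) mJ s}))" for s
    have mIJ_injon_I: "inj_on mI (GI n)" unfolding mI_def by (rule mIJ_injon_I)
    have mIJ_injon_J: "inj_on mJ (GJ n a)" unfolding mJ_def by (rule mIJ_injon_J)
    have cI: "\<And>i. i \<in> GI n \<Longrightarrow> c (mI i) = x (CF {i})" using mIJ_injon_I by (simp add: c_def)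
    have cJ: "\<And>q. q \<in> GJ n a \<Longrightarrow> c (mJ q) = x (CG {q})"
    proof -
      fix q assume q: "q \<in> GJ n a"
      have "mJ q \<notin> mI ` GI n" using mIJ_disj unfolding mI_def mJ_def by (metis imageE)
      thus "c (mJ q) = x (CG {q})" using mIJ_injon_J q by (simp add: c_def)
    qed
    have "p = (\<Sum>s\<in>I_Gamma_gens n a. c s * s)"
      unfolding p d1_formula ideal_sum using cI cJ unfolding mI_def mJ_def by simp
    thus "p \<in> ideal_gen (I_Gamma_gens n a)" unfolding ideal_gen_def by blast
  qed
next
  show "ideal_gen (I_Gamma_gens n a) \<subseteq> {dC n a 1 x (CF {}) | x::cb \<Rightarrow> 'k qpoly. True}"
  proof
    fix p :: "'k qpoly" assume "p \<in> ideal_gen (I_Gamma_gens n a)"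
    then obtain c where p: "p = (\<Sum>s\<in>I_Gamma_gens n a. c s * s)" unfolding ideal_gen_def by blast
    define x where "x b = (case b of CF V \<Rightarrow> c (mono (gI (the_elem V))) | CG W \<Rightarrow> c (mono (gJ (the_elem W))) | CH W \<Rightarrow> 0)" for b
    have "p = dC n a 1 x (CF {})"
      unfolding p d1_formula ideal_sum by (simp add: x_def)
    thus "p \<in> {dC n a 1 x (CF {}) | x::cb \<Rightarrow> 'k qpoly. True}" by blast
  qed
qed


theorem mainTheorem7:
  fixes n :: nat and a :: "nat \<Rightarrow> nat"
  assumes "1 \<le> n"
  shows
    \<comment> \<open>each C_i is a finitely generated free Q-module\<close>
    "(\<forall>i. finite (cbasis n a i))
     \<comment> \<open>C is a complex: d_i o d_(i+1) = 0\<close>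
     \<and> (\<forall>i\<ge>1. \<forall>x::cb \<Rightarrow> 'k::field qpoly.
           in_C n a (Suc i) x \<longrightarrow> dC n a i (dC n a (Suc i) x) = (\<lambda>_. 0))
     \<comment> \<open>exactness at C_i for i >= 1\<close>
     \<and> (\<forall>i\<ge>1. \<forall>x::cb \<Rightarrow> 'k qpoly. in_C n a i x \<and> dC n a i x = (\<lambda>_. 0) \<longrightarrow>
           (\<exists>y. in_C n a (Suc i) y \<and> dC n a (Suc i) y = x))
     \<comment> \<open>H_0(C) = Q / I_Gamma: the image of d_1 in C_0 = Q is I_Gamma\<close>
     \<and> {dC n a 1 x (CF {}) | x::cb \<Rightarrow> 'k qpoly. True} = ideal_gen (I_Gamma_gens n a)
     \<comment> \<open>minimality: all entries of the differentials lie in the homogeneous maximal ideal\<close>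
     \<and> (\<forall>i\<ge>1. \<forall>b\<in>cbasis n a i. \<forall>b'\<in>cbasis n a (i - 1).
           Poly_Mapping.lookup (cdiff b b' :: 'k qpoly) 0 = 0)"
proof -
  have c1: "\<forall>i. finite (cbasis n a i)" by simp
  have c2: "\<forall>i\<ge>1. \<forall>x::cb \<Rightarrow> 'k::field qpoly.
           in_C n a (Suc i) x \<longrightarrow> dC n a i (dC n a (Suc i) x) = (\<lambda>_. 0)"
    using complex_dd by blast
  have c3: "\<forall>i\<ge>1. \<forall>x::cb \<Rightarrow> 'k qpoly. in_C n a i x \<and> dC n a i x = (\<lambda>_. 0) \<longrightarrow>
           (\<exists>y. in_C n a (Suc i) y \<and> dC n a (Suc i) y = x)"
    using exact by blast
  have c4: "{dC n a 1 x (CF {}) | x::cb \<Rightarrow> 'k qpoly. True} = ideal_gen (I_Gamma_gens n a)"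
    by (rule image_d1)
  have c5: "\<forall>i\<ge>1. \<forall>b\<in>cbasis n a i. \<forall>b'\<in>cbasis n a (i - 1).
           Poly_Mapping.lookup (cdiff b b' :: 'k qpoly) 0 = 0"
    using minimal by blast
  show ?thesis using c1 c2 c3 c4 c5 by blast
qed

end
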